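(* Let ${\bf F}=(F_1,F_2,F_3)$ be a triple of flags in $\mathcal F(\mathbb C^d)$ in general position satisfying property-$\star$, and let $\mathrm{Stab}(F_1,F_2)\subset\mathrm{SL}_d(\mathbb C)$ be the stabilizer of the ordered pair $(F_1,F_2)$. For $B\in\mathrm{Stab}(F_1,F_2)$ and $i\in\{1,\dots,d\}$ let $\mu_i(B)$ be the eigenvalue of $B$ on the line $F_2^i\cap F_1^{d-i+1}$. Then: (1) a sequence $(B_n)$ in $\mathrm{Stab}(F_1,F_2)$ satisfies $B_n^{-1}\cdot F_3\to F_1$ if and only if $\max_{1\le i\le d-1}|\mu_{i+1}(B_n)/\mu_i(B_n)|\to0$; (2) there is $C>0$ such that for every sequence $(B_n)$ in $\mathrm{Stab}(F_1,F_2)$ with $B_n^{-1}\cdot F_3\to F_1$, for all sufficiently large $n$, \[C^{-1}\max_{i}\Big|\frac{\mu_{i+1}(B_n)}{\mu_i(B_n)}\Big|\le d_{\mathcal F}(B_n^{-1}\cdot F_3,F_1)\le C\max_i\Big|\frac{\mu_{i+1}(B_n)}{\mu_i(B_n)}\Big|.\]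
   Context: $\mathcal F(\mathbb C^d)$ is the space of complete flags with a fixed Riemannian distance $d_{\mathcal F}$. Flags $F,G$ are transverse if $F^j+G^{d-j}=\mathbb C^d$ for all $j$; $F_1,F_2,F_3$ are in general position if $F_1^{k_1}+F_2^{k_2}+F_3^{k_3}=\mathbb C^d$ for all positive integers $k_i$ summing to $d$. A triple $(F_1,F_2,F_3)$ satisfies property-$\star$ if (1) $F_1,F_2$ and $F_2,F_3$ are transverse pairs, and (2) with $L_i=F_2^i\cap F_1^{d-i+1}$ and $\pi_i:\mathbb C^d\to L_i$ the projection with kernel $\bigoplus_{j\ne i}L_j$, for every $i\in\{1,\dots,d-1\}$ the restriction of $\pi_i$ to the line $F_2^{i+1}\cap F_3^{d-i}$ is an isomorphism onto $L_i$. *)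

theory Defs
  imports "HOL-Analysis.Analysis"
begin

text \<open>Vectors of C^d are \<open>complex^'n\<close> with d = CARD('n); complex-linear notions
  are those of the interpretation \<open>vec\<close> (scalar multiplication \<open>*s\<close>).
  A complete flag is F : nat => subspace with F j of complex dimension min j d,
  increasing in j (so F 0 = {0} and F j = C^d for j >= d).\<close>

definition is_flag :: "(nat \<Rightarrow> (complex^'n) set) \<Rightarrow> bool" where
  "is_flag F \<longleftrightarrow> (\<forall>j. vec.subspace (F j) \<and> vec.dim (F j) = min j CARD('n)) \<and>
                 (\<forall>j k. j \<le> k \<longrightarrow> F j \<subseteq> F k)"

definition ssum :: "(complex^'n) set \<Rightarrow> (complex^'n) set \<Rightarrow> (complex^'n) set" where
  "ssum U V = {u + v | u v. u \<in> U \<and> v \<in> V}"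

definition transverse :: "(nat \<Rightarrow> (complex^'n) set) \<Rightarrow> (nat \<Rightarrow> (complex^'n) set) \<Rightarrow> bool" where
  "transverse F G \<longleftrightarrow> (\<forall>j\<le>CARD('n). ssum (F j) (G (CARD('n) - j)) = UNIV)"

definition general_position ::
  "(nat \<Rightarrow> (complex^'n) set) \<Rightarrow> (nat \<Rightarrow> (complex^'n) set) \<Rightarrow> (nat \<Rightarrow> (complex^'n) set) \<Rightarrow> bool" where
  "general_position F1 F2 F3 \<longleftrightarrow>
     (\<forall>k1 k2 k3. 0 < k1 \<and> 0 < k2 \<and> 0 < k3 \<and> k1 + k2 + k3 = CARD('n) \<longrightarrow>
        ssum (ssum (F1 k1) (F2 k2)) (F3 k3) = UNIV)"

definition Lline :: "(nat \<Rightarrow> (complex^'n) set) \<Rightarrow> (nat \<Rightarrow> (complex^'n) set) \<Rightarrow> nat \<Rightarrow> (complex^'n) set" where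
  "Lline F1 F2 i = F2 i \<inter> F1 (CARD('n) - i + 1)"

definition proj_L :: "(nat \<Rightarrow> (complex^'n) set) \<Rightarrow> (nat \<Rightarrow> (complex^'n) set) \<Rightarrow> nat \<Rightarrow> complex^'n \<Rightarrow> complex^'n" where
  "proj_L F1 F2 i x = (THE y. y \<in> Lline F1 F2 i \<and>
      x - y \<in> vec.span (\<Union>j\<in>{1..CARD('n)} - {i}. Lline F1 F2 j))"

definition property_star ::
  "(nat \<Rightarrow> (complex^'n) set) \<Rightarrow> (nat \<Rightarrow> (complex^'n) set) \<Rightarrow> (nat \<Rightarrow> (complex^'n) set) \<Rightarrow> bool" where
  "property_star F1 F2 F3 \<longleftrightarrow> transverse F1 F2 \<and> transverse F2 F3 \<and>
     (\<forall>i\<in>{1..<CARD('n)}. bij_betw (proj_L F1 F2 i)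
          (F2 (i + 1) \<inter> F3 (CARD('n) - i)) (Lline F1 F2 i))"

definition flag_act :: "complex^'n^'n \<Rightarrow> (nat \<Rightarrow> (complex^'n) set) \<Rightarrow> (nat \<Rightarrow> (complex^'n) set)" where
  "flag_act B F = (\<lambda>j. (\<lambda>x. B *v x) ` F j)"

definition Stab :: "(nat \<Rightarrow> (complex^'n) set) \<Rightarrow> (nat \<Rightarrow> (complex^'n) set) \<Rightarrow> (complex^'n^'n) set" where
  "Stab F1 F2 = {B. det B = 1 \<and> flag_act B F1 = F1 \<and> flag_act B F2 = F2}"

definition mu :: "(nat \<Rightarrow> (complex^'n) set) \<Rightarrow> (nat \<Rightarrow> (complex^'n) set) \<Rightarrow> complex^'n^'n \<Rightarrow> nat \<Rightarrow> complex" where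
  "mu F1 F2 B i = (SOME c. \<forall>v\<in>Lline F1 F2 i. B *v v = c *s v)"

definition ratio_max :: "(nat \<Rightarrow> (complex^'n) set) \<Rightarrow> (nat \<Rightarrow> (complex^'n) set) \<Rightarrow> complex^'n^'n \<Rightarrow> real" where
  "ratio_max F1 F2 B = Max (insert 0 ((\<lambda>i. norm (mu F1 F2 B (i + 1) / mu F1 F2 B i)) ` {1..<CARD('n)}))"

definition hausdorff_dist :: "'a::metric_space set \<Rightarrow> 'a set \<Rightarrow> real" where
  "hausdorff_dist A B = max (SUP a\<in>A. infdist a B) (SUP b\<in>B. infdist b A)"

text \<open>It is
  bi-Lipschitz equivalent to any Riemannian distance on the flag manifold.\<close>
definition flag_dist :: "(nat \<Rightarrow> (complex^'n) set) \<Rightarrow> (nat \<Rightarrow> (complex^'n) set) \<Rightarrow> real" where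
  "flag_dist F G = (\<Sum>j\<in>{1..<CARD('n)}. hausdorff_dist (sphere 0 1 \<inter> F j) (sphere 0 1 \<inter> G j))"

end

theory Submission
  imports Defs
begin


lemma scaleR_cvec: "r *\<^sub>R (x::complex^'n) = complex_of_real r *s x"
  by (simp add: vec_eq_iff) (simp add: scaleR_conv_of_real)

lemma vsub_real: "vec.subspace (S::(complex^'n) set) \<Longrightarrow> subspace S"
  unfolding subspace_def vec.subspace_def by (auto simp: scaleR_cvec)

lemma vsub_closed: "vec.subspace (S::(complex^'n) set) \<Longrightarrow> closed S"
  by (simp add: closed_subspace vsub_real)

lemma vsub_scaleR: "vec.subspace (S::(complex^'n) set) \<Longrightarrow> x \<in> S \<Longrightarrow> r *\<^sub>R x \<in> S"
  by (simp add: scaleR_cvec vec.subspace_scale)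

lemma dim_inter_zero:
  fixes U V :: "(complex^'n) set"
  assumes "vec.subspace U" "vec.subspace V" "ssum U V = UNIV" "vec.dim U + vec.dim V = CARD('n)"
  shows "U \<inter> V \<subseteq> {0}"
proof -
  have "vec.dim (ssum U V) + vec.dim (U \<inter> V) = vec.dim U + vec.dim V"
    using vec.dim_sums_Int[OF assms(1,2)] unfolding ssum_def .
  then have "vec.dim (U \<inter> V) = 0" using assms(3,4) by (simp add: card_cart_basis)
  then show ?thesis by simp
qed

lemma dim_inter_pos:
  fixes U V :: "(complex^'n) set"
  assumes "vec.subspace U" "vec.subspace V" "vec.dim U + vec.dim V = CARD('n) + 1"
  shows "\<exists>x\<in>U \<inter> V. x \<noteq> 0"
proof -
  have "vec.dim (ssum U V) + vec.dim (U \<inter> V) = vec.dim U + vec.dim V"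
    using vec.dim_sums_Int[OF assms(1,2)] unfolding ssum_def .
  moreover have "vec.dim (ssum U V) \<le> CARD('n)"
    using vec.dim_subset_UNIV by (simp add: card_cart_basis vec.dimension_def)
  ultimately have "vec.dim (U \<inter> V) \<noteq> 0" using assms(3) by linarith
  then show ?thesis by auto
qed

lemma bl_functional:
  fixes f :: "complex^'n \<Rightarrow> complex"
  assumes "\<And>x y. f (x + y) = f x + f y" "\<And>c x. f (c *s x) = c * f x"
  shows "bounded_linear f"
proof -
  have "linear f"
    by (rule linearI) (auto simp: assms scaleR_cvec scaleR_conv_of_real)
  then show ?thesis by (simp add: linear_conv_bounded_linear)
qed

lemma bl_map:
  fixes f :: "complex^'n \<Rightarrow> complex^'n"
  assumes "\<And>x y. f (x + y) = f x + f y" "\<And>c x. f (c *s x) = c *s f x"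
  shows "bounded_linear f"
proof -
  have "linear f"
    by (rule linearI) (auto simp: assms scaleR_cvec)
  then show ?thesis by (simp add: linear_conv_bounded_linear)
qed

lemma hd_nonneg: "A \<noteq> {} \<Longrightarrow> bdd_above ((\<lambda>a. infdist a B) ` A) \<Longrightarrow> 0 \<le> hausdorff_dist A B"
  unfolding hausdorff_dist_def
  by (meson all_not_in_conv cSUP_upper2 infdist_nonneg max.coboundedI1)

lemma hd_upper:
  assumes "A \<noteq> {}" "B \<noteq> {}" "\<And>a. a \<in> A \<Longrightarrow> \<exists>b\<in>B. dist a b \<le> e"
    "\<And>b. b \<in> B \<Longrightarrow> \<exists>a\<in>A. dist b a \<le> e"
  shows "hausdorff_dist A B \<le> e"
  unfolding hausdorff_dist_def
proof (rule max.boundedI)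
  show "(SUP a\<in>A. infdist a B) \<le> e"
    by (rule cSUP_least[OF assms(1)]) (meson assms(3) infdist_le2)
  show "(SUP a\<in>B. infdist a A) \<le> e"
    by (rule cSUP_least[OF assms(2)]) (meson assms(4) infdist_le2)
qed

lemma hd_lower:
  assumes "a \<in> A" "B \<noteq> {}" "bdd_above ((\<lambda>a. infdist a B) ` A)" "\<And>b. b \<in> B \<Longrightarrow> e \<le> dist a b"
  shows "e \<le> hausdorff_dist A B"
proof -
  have "e \<le> infdist a B"
    unfolding infdist_notempty[OF assms(2)] by (rule cINF_greatest[OF assms(2)]) (use assms(4) in auto)
  also have "\<dots> \<le> (SUP a\<in>A. infdist a B)" by (rule cSUP_upper[OF assms(1,3)])
  finally show ?thesis unfolding hausdorff_dist_def by simp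
qed

lemma bdd_sphere:
  fixes A B :: "'a::real_normed_vector set"
  assumes "A \<subseteq> sphere 0 1" "b \<in> B" "B \<subseteq> sphere 0 1"
  shows "bdd_above ((\<lambda>a. infdist a B) ` A)"
proof (rule bdd_aboveI2)
  fix a assume "a \<in> A"
  have "infdist a B \<le> dist a b" by (rule infdist_le[OF assms(2)])
  also have "\<dots> \<le> norm a + norm b" by (simp add: dist_norm norm_triangle_ineq4)
  also have "\<dots> = 2" using assms \<open>a\<in>A\<close> by (auto simp: subset_iff)
  finally show "infdist a B \<le> 2" .
qed

lemma norm_smult: "norm (c *s (x::complex^'n)) = norm c * norm x"
  unfolding norm_vec_def by (simp add: norm_mult L2_set_right_distrib)

lemma flagD:
  fixes F :: "nat \<Rightarrow> (complex^'n) set"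
  assumes "is_flag F"
  shows "vec.subspace (F j)" "vec.dim (F j) = min j CARD('n)" "j \<le> k \<Longrightarrow> F j \<subseteq> F k"
  using assms unfolding is_flag_def by auto

locale twoflags =
  fixes F1 F2 :: "nat \<Rightarrow> (complex^'n) set"
  assumes fl1: "is_flag F1" and fl2: "is_flag F2" and tr12: "transverse F1 F2"
begin

abbreviation "L \<equiv> Lline F1 F2"

lemma sub1: "vec.subspace (F1 j)" and sub2: "vec.subspace (F2 j)"
  using flagD fl1 fl2 by auto

lemma dim1: "vec.dim (F1 j) = min j CARD('n)" and dim2: "vec.dim (F2 j) = min j CARD('n)"
  using flagD fl1 fl2 by auto

lemma mono1: "j \<le> k \<Longrightarrow> F1 j \<subseteq> F1 k" and mono2: "j \<le> k \<Longrightarrow> F2 j \<subseteq> F2 k"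
  using flagD(3)[OF fl1] flagD(3)[OF fl2] by auto

lemma zero_int: assumes "m \<le> CARD('n)" shows "F2 m \<inter> F1 (CARD('n) - m) \<subseteq> {0}"
proof -
  have "ssum (F1 (CARD('n) - m)) (F2 (CARD('n) - (CARD('n) - m))) = UNIV"
    using tr12 unfolding transverse_def by simp
  then have "ssum (F1 (CARD('n) - m)) (F2 m) = UNIV" using assms by simp
  from dim_inter_zero[OF sub1 sub2 this] assms show ?thesis by (auto simp: dim1 dim2)
qed

lemma L_sub: "vec.subspace (L j)"
  unfolding Lline_def by (simp add: sub1 sub2 vec.subspace_inter)

lemma L_nonzero: assumes "1 \<le> j" "j \<le> CARD('n)" shows "\<exists>x\<in>L j. norm x = 1"
proof -
  have "vec.dim (F2 j) + vec.dim (F1 (CARD('n) - j + 1)) = CARD('n) + 1"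
    using assms by (simp add: dim1 dim2)
  from dim_inter_pos[OF sub2 sub1 this] obtain x where x: "x \<in> L j" "x \<noteq> 0"
    unfolding Lline_def by auto
  then have "(1 / norm x) *\<^sub>R x \<in> L j" by (simp add: vsub_scaleR L_sub)
  moreover have "norm ((1 / norm x) *\<^sub>R x) = 1" using x by simp
  ultimately show ?thesis by blast
qed

definition "vv j = (SOME x. x \<in> L j \<and> norm x = 1)"

lemma vv: assumes "j \<in> {1..CARD('n)}" shows "vv j \<in> L j" "norm (vv j) = 1"
proof -
  have "\<exists>x. x \<in> L j \<and> norm x = 1" using L_nonzero[of j] assms by auto
  from someI_ex[OF this] show "vv j \<in> L j" "norm (vv j) = 1" unfolding vv_def by auto
qed

lemma vv_ne: "j \<in> {1..CARD('n)} \<Longrightarrow> vv j \<noteq> 0"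
  using vv(2) by force

lemma vv_F2: "j \<in> {1..CARD('n)} \<Longrightarrow> j \<le> m \<Longrightarrow> vv j \<in> F2 m"
  using vv(1)[of j] mono2[of j m] unfolding Lline_def by auto

lemma vv_F1: assumes "j \<in> {1..CARD('n)}" "CARD('n) - k < j" shows "vv j \<in> F1 k"
proof -
  have "CARD('n) - j + 1 \<le> k" using assms by auto
  then show ?thesis using vv(1)[OF assms(1)] mono1[of "CARD('n) - j + 1" k] unfolding Lline_def by auto
qed

lemma indep_aux: "m \<le> CARD('n) \<Longrightarrow> vec.independent (vv ` {1..m}) \<and> inj_on vv {1..m}"
proof (induction m)
  case 0
  then show ?case by (simp add: vec.independent_empty)
next
  case (Suc m)
  then have IH: "vec.independent (vv ` {1..m})" "inj_on vv {1..m}" by auto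
  have "vv ` {1..m} \<subseteq> F2 m" using Suc.prems vv_F2 by auto
  then have sp: "vec.span (vv ` {1..m}) \<subseteq> F2 m"
    using vec.span_minimal sub2 by blast
  have "vv (Suc m) \<in> F1 (CARD('n) - m)" using Suc.prems by (intro vv_F1) auto
  moreover have "vv (Suc m) \<noteq> 0" using Suc.prems by (intro vv_ne) auto
  ultimately have nin: "vv (Suc m) \<notin> vec.span (vv ` {1..m})"
    using zero_int[of m] Suc.prems sp by auto
  have eq: "{1..Suc m} = insert (Suc m) {1..m}" by auto
  have "vec.independent (vv ` {1..Suc m})"
    unfolding eq image_insert by (rule vec.independent_insertI[OF nin IH(1)])
  moreover have "vv (Suc m) \<notin> vv ` {1..m}" using nin vec.span_base by blast
  then have "inj_on vv {1..Suc m}"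
    unfolding eq using IH(2) by simp
  ultimately show ?case by blast
qed

abbreviation "Bs \<equiv> vv ` {1..CARD('n)}"

lemma indep: "vec.independent Bs" and inj_vv: "inj_on vv {1..CARD('n)}"
  using indep_aux[of "CARD('n)"] by auto

lemma span_Bs: "vec.span Bs = UNIV"
proof -
  have c: "card Bs = CARD('n)" using card_image[OF inj_vv] by simp
  have "UNIV \<subseteq> vec.span Bs"
    by (rule vec.card_ge_dim_independent[OF _ indep]) (use c in \<open>simp_all add: card_cart_basis\<close>)
  then show ?thesis by auto
qed

lemma F2_span: assumes "m \<le> CARD('n)" shows "F2 m = vec.span (vv ` {1..m})"
proof (rule vec.span_subspace[symmetric])
  show "vv ` {1..m} \<subseteq> F2 m" using vv_F2 assms by auto
  have inj: "inj_on vv {1..m}" using inj_vv assms by (auto intro: inj_on_subset)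
  have c: "card (vv ` {1..m}) = m" using card_image[OF inj] by simp
  show "F2 m \<subseteq> vec.span (vv ` {1..m})"
    by (rule vec.card_ge_dim_independent) (use assms vv_F2 indep_aux[OF assms] c in \<open>auto simp: dim2\<close>)
qed (rule sub2)

lemma F1_span: assumes "k \<le> CARD('n)" shows "F1 k = vec.span (vv ` {CARD('n)-k+1..CARD('n)})"
proof (rule vec.span_subspace[symmetric])
  show "vv ` {CARD('n)-k+1..CARD('n)} \<subseteq> F1 k" using vv_F1 assms by auto
  have inj: "inj_on vv {CARD('n)-k+1..CARD('n)}" using inj_vv assms by (auto intro: inj_on_subset)
  have ind: "vec.independent (vv ` {CARD('n)-k+1..CARD('n)})"
    by (rule vec.independent_mono[OF indep]) auto
  have c: "card (vv ` {CARD('n)-k+1..CARD('n)}) = k" using card_image[OF inj] assms by simp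
  show "F1 k \<subseteq> vec.span (vv ` {CARD('n)-k+1..CARD('n)})"
    by (rule vec.card_ge_dim_independent) (use assms vv_F1 ind c in \<open>auto simp: dim1\<close>)
qed (rule sub1)

definition "coef j x = vec.representation Bs x (vv j)"

lemma expand: "x = (\<Sum>j\<in>{1..CARD('n)}. coef j x *s vv j)"
proof -
  have "(\<Sum>b\<in>Bs. vec.representation Bs x b *s b) = x"
    by (rule vec.sum_representation_eq[OF indep]) (auto simp: span_Bs[unfolded One_nat_def])
  then show ?thesis unfolding coef_def sum.reindex[OF inj_vv] by (simp add: o_def)
qed

lemma coef_add: "coef j (x + y) = coef j x + coef j y"
  unfolding coef_def vec.representation_add[OF indep, of y x, unfolded span_Bs, OF UNIV_I UNIV_I] by simp

lemma coef_scale: "coef j (c *s x) = c * coef j x"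
  unfolding coef_def vec.representation_scale[OF indep, of x c, unfolded span_Bs, OF UNIV_I] by simp

lemma coef_diff: "coef j (x - y) = coef j x - coef j y"
  unfolding coef_def vec.representation_diff[OF indep, of y x, unfolded span_Bs, OF UNIV_I UNIV_I] by simp

lemma coef_sum: "coef j (\<Sum>l\<in>S. f l) = (\<Sum>l\<in>S. coef j (f l))"
  unfolding coef_def vec.representation_sum[OF indep, of S f, unfolded span_Bs, OF UNIV_I] by simp

lemma coef_vv: "j \<in> {1..CARD('n)} \<Longrightarrow> l \<in> {1..CARD('n)} \<Longrightarrow> coef j (vv l) = (if j = l then 1 else 0)"
  unfolding coef_def using vec.representation_basis[OF indep, of "vv l"] inj_vv
  by (auto simp: inj_on_eq_iff)

lemma coef_comb: assumes "S \<subseteq> {1..CARD('n)}" "j \<in> {1..CARD('n)}"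
  shows "coef j (\<Sum>l\<in>S. c l *s vv l) = (if j \<in> S then c j else 0)"
proof -
  have "coef j (\<Sum>l\<in>S. c l *s vv l) = (\<Sum>l\<in>S. c l * (if j = l then 1 else 0))"
    unfolding coef_sum coef_scale using assms by (intro sum.cong) (auto simp: coef_vv)
  also have "\<dots> = (if j \<in> S then c j else 0)"
    using assms by (simp add: finite_subset[OF assms(1)] if_distrib sum.delta cong: if_cong)
  finally show ?thesis .
qed

lemma coef_span: assumes "S \<subseteq> {1..CARD('n)}" "x \<in> vec.span (vv ` S)" "j \<in> {1..CARD('n)} - S"
  shows "coef j x = 0"
proof -
  have "vec.representation Bs x = vec.representation (vv ` S) x"
    by (rule vec.representation_extend[OF indep assms(2)]) (use assms in auto)
  moreover have "vv j \<notin> vv ` S" using assms inj_vv by (auto simp: inj_on_eq_iff subset_iff)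
  ultimately show ?thesis unfolding coef_def using vec.representation_ne_zero by metis
qed

lemma F2_coef: "x \<in> F2 m \<Longrightarrow> m \<le> CARD('n) \<Longrightarrow> m < j \<Longrightarrow> j \<le> CARD('n) \<Longrightarrow> coef j x = 0"
  using coef_span[of "{1..m}" x j] F2_span by auto

lemma F1_coef: "x \<in> F1 k \<Longrightarrow> k \<le> CARD('n) \<Longrightarrow> 1 \<le> j \<Longrightarrow> j \<le> CARD('n) - k \<Longrightarrow> coef j x = 0"
  using coef_span[of "{CARD('n)-k+1..CARD('n)}" x j] F1_span by auto

lemma expand_sub: assumes "S \<subseteq> {1..CARD('n)}" "\<And>j. j \<in> {1..CARD('n)} - S \<Longrightarrow> coef j x = 0"
  shows "x = (\<Sum>j\<in>S. coef j x *s vv j)"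
proof -
  have "(\<Sum>j\<in>S. coef j x *s vv j) = (\<Sum>j\<in>{1..CARD('n)}. coef j x *s vv j)"
    by (rule sum.mono_neutral_left) (use assms in auto)
  then show ?thesis using expand by simp
qed

lemma comb_F2: "m \<le> CARD('n) \<Longrightarrow> (\<Sum>j\<in>{1..m}. c j *s vv j) \<in> F2 m"
  unfolding F2_span by (intro vec.span_sum vec.span_scale vec.span_base) auto

lemma comb_F1: "k \<le> CARD('n) \<Longrightarrow> (\<Sum>j\<in>{CARD('n)-k+1..CARD('n)}. c j *s vv j) \<in> F1 k"
  unfolding F1_span by (intro vec.span_sum vec.span_scale vec.span_base) auto

lemma coef_bound: "\<exists>K>0. \<forall>j\<in>{1..CARD('n)}. \<forall>x. norm (coef j x) \<le> K * norm x"
proof -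
  have "\<forall>j\<in>{1..CARD('n)}. \<exists>K>0. \<forall>x. norm (coef j x) \<le> K * norm x"
  proof
    fix j
    have "bounded_linear (coef j)" by (rule bl_functional) (auto simp: coef_add coef_scale)
    then obtain K where "K > 0" "\<forall>x. norm (coef j x) \<le> norm x * K"
      using bounded_linear.pos_bounded by blast
    then show "\<exists>K>0. \<forall>x. norm (coef j x) \<le> K * norm x" by (auto simp: mult.commute)
  qed
  then obtain K where K: "\<forall>j\<in>{1..CARD('n)}. K j > 0 \<and> (\<forall>x. norm (coef j x) \<le> K j * norm x)"
    by metis
  define K0 where "K0 = Max (insert 1 (K ` {1..CARD('n)}))"
  have "K0 > 0" unfolding K0_def by (meson Max_ge finite_imageI finite_atLeastAtMost finite_insert insertI1 less_le_trans zero_less_one)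
  moreover have "\<forall>j\<in>{1..CARD('n)}. \<forall>x. norm (coef j x) \<le> K0 * norm x"
  proof (intro ballI allI)
    fix j and x :: "complex^'n" assume j: "j \<in> {1..CARD('n)}"
    have "K j \<le> K0" unfolding K0_def using j by (intro Max_ge) auto
    then have "K j * norm x \<le> K0 * norm x" by (simp add: mult_right_mono)
    then show "norm (coef j x) \<le> K0 * norm x" using K j by (meson order.trans)
  qed
  ultimately show ?thesis by blast
qed

lemma norm_le_coefs: "norm x \<le> (\<Sum>j\<in>S. norm (coef j x))" if "S \<subseteq> {1..CARD('n)}" "\<And>j. j \<in> {1..CARD('n)} - S \<Longrightarrow> coef j x = 0"
proof -
  have "norm x = norm (\<Sum>j\<in>S. coef j x *s vv j)" using expand_sub[OF that] by simp
  also have "\<dots> \<le> (\<Sum>j\<in>S. norm (coef j x *s vv j))" by (rule norm_sum)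
  also have "\<dots> = (\<Sum>j\<in>S. norm (coef j x))"
    by (intro sum.cong refl) (use that vv(2) in \<open>auto simp: norm_smult\<close>)
  finally show ?thesis .
qed

lemma L_char: "j \<in> {1..CARD('n)} \<Longrightarrow> x \<in> L j \<Longrightarrow> x = coef j x *s vv j"
proof -
  assume j: "j \<in> {1..CARD('n)}" and x: "x \<in> L j"
  have x2: "x \<in> F2 j" and x1: "x \<in> F1 (CARD('n) - j + 1)" using x unfolding Lline_def by auto
  have "coef l x = 0" if l: "l \<in> {1..CARD('n)} - {j}" for l
  proof (cases "l < j")
    case True
    show ?thesis by (rule F1_coef[OF x1]) (use j l True in auto)
  next
    case False
    then show ?thesis using F2_coef[OF x2] j l by auto
  qed
  then show ?thesis using expand_sub[of "{j}" x] j by auto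
qed

end


lemma mv_hom: "module_hom (*s) (*s) ((*v) (A::complex^'n^'n))"
  using matrix_vector_mul_linear_gen linear_iff_module_hom by blast

lemma mv_add: "(A::complex^'n^'n) *v (x + y) = A *v x + A *v y"
  by (rule module_hom.add[OF mv_hom])
lemma mv_scale: "(A::complex^'n^'n) *v (c *s x) = c *s (A *v x)"
  by (rule module_hom.scale[OF mv_hom])
lemma mv_sum: "(A::complex^'n^'n) *v (\<Sum>i\<in>S. f i) = (\<Sum>i\<in>S. A *v f i)"
  by (rule module_hom.sum[OF mv_hom])
lemma mv_diff: "(A::complex^'n^'n) *v (x - y) = A *v x - A *v y"
  by (rule module_hom.diff[OF mv_hom])

context twoflags begin

lemma proj_eq: assumes j: "j \<in> {1..CARD('n)}"
  shows "proj_L F1 F2 j x = coef j x *s vv j"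
  unfolding proj_L_def
proof (rule the_equality)
  let ?U = "vec.span (\<Union>l\<in>{1..CARD('n)} - {j}. L l)"
  show "coef j x *s vv j \<in> L j \<and> x - coef j x *s vv j \<in> ?U"
  proof
    show "coef j x *s vv j \<in> L j" using vv(1)[OF j] L_sub vec.subspace_scale by blast
    have "x = coef j x *s vv j + (\<Sum>l\<in>{1..CARD('n)} - {j}. coef l x *s vv l)"
      using expand[of x] j by (simp add: sum.remove)
    then have "x - coef j x *s vv j = (\<Sum>l\<in>{1..CARD('n)} - {j}. coef l x *s vv l)"
      by (simp add: algebra_simps)
    also have "\<dots> \<in> ?U"
      by (intro vec.span_sum vec.span_scale vec.span_base) (use vv(1) in blast)
    finally show "x - coef j x *s vv j \<in> ?U" .
  qed
  fix y assume y: "y \<in> L j \<and> x - y \<in> ?U"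
  have "?U \<subseteq> vec.span (vv ` ({1..CARD('n)} - {j}))"
  proof (rule vec.span_minimal)
    show "(\<Union>l\<in>{1..CARD('n)} - {j}. L l) \<subseteq> vec.span (vv ` ({1..CARD('n)} - {j}))"
    proof
      fix z assume "z \<in> (\<Union>l\<in>{1..CARD('n)} - {j}. L l)"
      then obtain l where l: "l \<in> {1..CARD('n)} - {j}" "z \<in> L l" by blast
      then have "z = coef l z *s vv l" using L_char by auto
      also have "\<dots> \<in> vec.span (vv ` ({1..CARD('n)} - {j}))"
        by (intro vec.span_scale vec.span_base) (use l in auto)
      finally show "z \<in> vec.span (vv ` ({1..CARD('n)} - {j}))" .
    qed
  qed auto
  then have "coef j (x - y) = 0" using y j by (intro coef_span[of "{1..CARD('n)} - {j}"]) auto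
  then have "coef j y = coef j x" by (simp add: coef_diff)
  then show "y = coef j x *s vv j" using L_char[OF j] y by metis
qed

context
  fixes B :: "complex^'n^'n"
  assumes BS: "B \<in> Stab F1 F2"
begin

lemma B_F1: "x \<in> F1 k \<Longrightarrow> B *v x \<in> F1 k" and B_F2: "x \<in> F2 k \<Longrightarrow> B *v x \<in> F2 k"
proof -
  have "flag_act B F1 = F1" "flag_act B F2 = F2" using BS unfolding Stab_def by auto
  then have e: "(\<lambda>x. B *v x) ` F1 k = F1 k" "(\<lambda>x. B *v x) ` F2 k = F2 k"
    unfolding flag_act_def by (metis)+
  show "x \<in> F1 k \<Longrightarrow> B *v x \<in> F1 k" using e(1) by blast
  show "x \<in> F2 k \<Longrightarrow> B *v x \<in> F2 k" using e(2) by blast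
qed

lemma B_inv: "invertible B" using BS by (simp add: Stab_def invertible_det_nz)

abbreviation "D \<equiv> matrix_inv B"

lemma DB: "D *v (B *v x) = x" and BD: "B *v (D *v x) = x"
proof -
  have "B ** D = mat 1 \<and> D ** B = mat 1"
    using B_inv unfolding invertible_def matrix_inv_def by (rule someI_ex)
  then show "D *v (B *v x) = x" "B *v (D *v x) = x" by (simp_all add: matrix_vector_mul_assoc)
qed

lemma B_vv: assumes j: "j \<in> {1..CARD('n)}" shows "B *v vv j = mu F1 F2 B j *s vv j"
proof -
  have "B *v vv j \<in> L j" using vv(1)[OF j] B_F1 B_F2 unfolding Lline_def by auto
  then have e: "B *v vv j = coef j (B *v vv j) *s vv j" using L_char[OF j] by blast
  have "\<forall>v\<in>L j. B *v v = coef j (B *v vv j) *s v"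
  proof
    fix v assume "v \<in> L j"
    then have "v = coef j v *s vv j" using L_char[OF j] by blast
    define c where "c = coef j (B *v vv j)"
    have "B *v v = B *v (coef j v *s vv j)" using \<open>v = _\<close> by simp
    also have "\<dots> = coef j v *s (c *s vv j)" using e unfolding c_def by (simp add: mv_scale)
    also have "\<dots> = c *s (coef j v *s vv j)" by (simp add: vector_smult_assoc mult.commute)
    also have "\<dots> = c *s v" using \<open>v = _\<close> by simp
    also note c_def
    finally show "B *v v = coef j (B *v vv j) *s v" .
  qed
  then have "\<forall>v\<in>L j. B *v v = mu F1 F2 B j *s v"
    unfolding mu_def by (rule someI)
  then show ?thesis using vv(1)[OF j] by blast
qed

lemma mu_nz: assumes j: "j \<in> {1..CARD('n)}" shows "mu F1 F2 B j \<noteq> 0"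
proof
  assume "mu F1 F2 B j = 0"
  then have "B *v vv j = 0" using B_vv[OF j] by simp
  then have "vv j = 0" using DB[of "vv j"] by simp
  then show False using vv_ne[OF j] by simp
qed

lemma D_vv: assumes j: "j \<in> {1..CARD('n)}" shows "D *v vv j = (1 / mu F1 F2 B j) *s vv j"
proof -
  have "B *v ((1 / mu F1 F2 B j) *s vv j) = vv j"
    using B_vv[OF j] mu_nz[OF j] by (simp add: mv_scale)
  then show ?thesis using DB by metis
qed

lemma coef_D: assumes j: "j \<in> {1..CARD('n)}" shows "coef j (D *v x) = coef j x / mu F1 F2 B j"
proof -
  have "D *v x = (\<Sum>l\<in>{1..CARD('n)}. (coef l x / mu F1 F2 B l) *s vv l)"
    by (subst expand[of x]) (simp add: mv_sum mv_scale D_vv)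
  then show ?thesis using coef_comb[of "{1..CARD('n)}" j] j by simp
qed

lemma coef_B: assumes j: "j \<in> {1..CARD('n)}" shows "coef j (B *v x) = coef j x * mu F1 F2 B j"
  using coef_D[OF j, of "B *v x"] mu_nz[OF j] by (simp add: DB field_simps)

end
end


lemma norm_approx:
  fixes t v :: "'a::real_normed_vector"
  assumes "norm t = 1" "v \<noteq> 0"
  shows "dist t ((1 / norm v) *\<^sub>R v) \<le> 2 * norm (v - t)"
proof -
  have "norm (v - (1 / norm v) *\<^sub>R v) = \<bar>norm v - 1\<bar>"
  proof -
    have "v - (1 / norm v) *\<^sub>R v = (1 - 1 / norm v) *\<^sub>R v" by (simp add: algebra_simps)
    then have "norm (v - (1 / norm v) *\<^sub>R v) = \<bar>1 - 1 / norm v\<bar> * norm v" by simp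
    also have "\<dots> = \<bar>(1 - 1 / norm v) * norm v\<bar>" by (simp add: abs_mult)
    also have "\<dots> = \<bar>norm v - 1\<bar>" using assms(2) by (simp add: left_diff_distrib)
    finally show ?thesis .
  qed
  also have "\<dots> = \<bar>norm v - norm t\<bar>" using assms by simp
  also have "\<dots> \<le> norm (v - t)" by (rule norm_triangle_ineq3)
  finally have 1: "norm (v - (1 / norm v) *\<^sub>R v) \<le> norm (v - t)" .
  have "dist t ((1 / norm v) *\<^sub>R v) \<le> norm (t - v) + norm (v - (1 / norm v) *\<^sub>R v)"
    unfolding dist_norm by (rule order.trans[OF _ norm_triangle_ineq]) simp
  also have "\<dots> \<le> 2 * norm (v - t)" using 1 by (simp add: norm_minus_commute)
  finally show ?thesis .
qed

context twoflags begin

lemma coef_scaleR: "coef j (r *\<^sub>R x) = r *\<^sub>R coef j x"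
  by (simp add: scaleR_cvec coef_scale scaleR_conv_of_real)

lemma coef_bl: "bounded_linear (coef j)"
  by (rule bl_functional) (auto simp: coef_add coef_scale)

lemma coef_cont: "continuous_on S (coef j)"
  by (simp add: coef_bl linear_continuous_on)

context
  fixes B :: "complex^'n^'n" and \<rho> :: real
  assumes BS: "B \<in> Stab F1 F2" and rho1: "\<rho> \<le> 1"
    and rat: "\<forall>j\<in>{1..<CARD('n)}. norm (mu F1 F2 B (j + 1) / mu F1 F2 B j) \<le> \<rho>"
begin

lemma mu_step: assumes "1 \<le> l" "Suc l \<le> CARD('n)"
  shows "norm (mu F1 F2 B (Suc l)) \<le> \<rho> * norm (mu F1 F2 B l)"
proof -
  have l: "l \<in> {1..CARD('n)}" using assms by auto
  have "norm (mu F1 F2 B (l + 1) / mu F1 F2 B l) \<le> \<rho>" using rat assms by auto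
  then show ?thesis
    using mu_nz[OF BS l] by (simp add: norm_divide divide_le_eq mult.commute)
qed

lemma mu_decay: assumes "1 \<le> j" "j < l" "l \<le> CARD('n)"
  shows "norm (mu F1 F2 B l) \<le> \<rho> * norm (mu F1 F2 B j)"
proof -
  have "Suc j \<le> l \<Longrightarrow> l \<le> CARD('n) \<Longrightarrow> norm (mu F1 F2 B l) \<le> \<rho> * norm (mu F1 F2 B j)" for l
  proof (induction l)
    case 0
    then show ?case by simp
  next
    case (Suc l)
    show ?case
    proof (cases "l = j")
      case True
      then show ?thesis using mu_step[of j] Suc.prems assms by simp
    next
      case False
      then have IH: "norm (mu F1 F2 B l) \<le> \<rho> * norm (mu F1 F2 B j)" using Suc by simp
      have "norm (mu F1 F2 B (Suc l)) \<le> \<rho> * norm (mu F1 F2 B l)"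
        using mu_step[of l] Suc.prems False assms by simp
      also have "\<dots> \<le> norm (mu F1 F2 B l)"
        using mult_right_mono[OF rho1 norm_ge_zero, of "mu F1 F2 B l"] by simp
      finally show ?thesis using IH by simp
    qed
  qed
  then show ?thesis using assms by simp
qed

end

end


locale setting = twoflags F1 F2 for F1 F2 :: "nat \<Rightarrow> (complex^'n) set" +
  fixes F3 :: "nat \<Rightarrow> (complex^'n) set"
  assumes fl3: "is_flag F3" and tr23: "transverse F2 F3"
    and pst: "\<forall>i\<in>{1..<CARD('n)}. bij_betw (proj_L F1 F2 i) (F2 (i + 1) \<inter> F3 (CARD('n) - i)) (Lline F1 F2 i)"
begin

lemma sub3: "vec.subspace (F3 j)" and dim3: "vec.dim (F3 j) = min j CARD('n)"
  using flagD fl3 by auto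

lemma sum23: assumes "m \<le> CARD('n)" shows "ssum (F2 m) (F3 (CARD('n) - m)) = UNIV"
  using tr23 assms unfolding transverse_def by simp

lemma int23: assumes "m \<le> CARD('n)" shows "F2 m \<inter> F3 (CARD('n) - m) \<subseteq> {0}"
  by (rule dim_inter_zero[OF sub2 sub3 sum23[OF assms]]) (use assms in \<open>simp add: dim2 dim3\<close>)

lemma compact_bound: assumes k: "k \<le> CARD('n)"
  shows "\<exists>c>0. \<forall>x\<in>F3 k. c * norm x \<le> (\<Sum>l\<in>{CARD('n)-k+1..CARD('n)}. norm (coef l x))"
proof -
  define g where "g x = (\<Sum>l\<in>{CARD('n)-k+1..CARD('n)}. norm (coef l x))" for x
  define S where "S = sphere (0::complex^'n) 1 \<inter> F3 k"
  have g_scale: "g (r *\<^sub>R x) = \<bar>r\<bar> * g x" for r x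
    unfolding g_def by (simp add: coef_scaleR sum_distrib_left)
  have inS: "(1 / norm x) *\<^sub>R x \<in> S" if "x \<in> F3 k" "x \<noteq> 0" for x
    using that vsub_scaleR[OF sub3] unfolding S_def by simp
  have red: "\<exists>c>0. \<forall>x\<in>F3 k. c * norm x \<le> g x" if c: "c > 0" "\<forall>y\<in>S. c \<le> g y" for c
  proof (intro exI[of _ c] conjI ballI)
    fix x assume x: "x \<in> F3 k"
    show "c * norm x \<le> g x"
    proof (cases "x = 0")
      case True
      then show ?thesis unfolding g_def by (simp add: sum_nonneg)
    next
      case False
      have "c \<le> g ((1 / norm x) *\<^sub>R x)" using c inS[OF x False] by blast
      also have "\<dots> = g x / norm x" using g_scale by simp
      finally show ?thesis using False by (simp add: field_simps)
    qed
  qed (use c in auto)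
  show ?thesis
  proof (cases "S = {}")
    case True
    then show ?thesis unfolding g_def[symmetric] using red[of 1] by auto
  next
    case False
    have "compact S" unfolding S_def by (intro compact_Int_closed compact_sphere vsub_closed sub3)
    moreover have "continuous_on S g" unfolding g_def
      by (intro continuous_on_sum continuous_on_norm coef_cont)
    ultimately obtain x0 where x0: "x0 \<in> S" "\<forall>y\<in>S. g x0 \<le> g y"
      using continuous_attains_inf[OF _ False] by blast
    have "g x0 > 0"
    proof (rule ccontr)
      assume "\<not> g x0 > 0"
      then have "g x0 = 0" unfolding g_def by (simp add: sum_nonneg order.antisym)
      then have z: "\<forall>l\<in>{CARD('n)-k+1..CARD('n)}. coef l x0 = 0"
        unfolding g_def by (subst (asm) sum_nonneg_eq_0_iff) auto
      have "x0 = (\<Sum>j\<in>{1..CARD('n)-k}. coef j x0 *s vv j)"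
        by (rule expand_sub) (use z in auto)
      also have "\<dots> \<in> F2 (CARD('n) - k)" by (rule comb_F2) simp
      finally have "x0 \<in> F2 (CARD('n) - k)" .
      moreover have "x0 \<in> F3 (CARD('n) - (CARD('n) - k))" using x0 k unfolding S_def by simp
      ultimately have "x0 = 0" using int23[of "CARD('n) - k"] by auto
      then show False using x0 unfolding S_def by simp
    qed
    then show ?thesis unfolding g_def[symmetric] using red x0 by blast
  qed
qed

end


context twoflags begin

definition "apart k y = (\<Sum>l\<in>{CARD('n)-k+1..CARD('n)}. coef l y *s vv l)"
definition "bpart k y = (\<Sum>l\<in>{1..CARD('n)-k}. coef l y *s vv l)"

lemma split_ab: assumes "k \<le> CARD('n)" shows "y = apart k y + bpart k y"
proof -
  have u: "{1..CARD('n)} = {CARD('n)-k+1..CARD('n)} \<union> {1..CARD('n)-k}" using assms by auto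
  have "y = (\<Sum>l\<in>{1..CARD('n)}. coef l y *s vv l)" by (rule expand)
  also have "\<dots> = apart k y + bpart k y" unfolding u apart_def bpart_def
    by (rule sum.union_disjoint) auto
  finally show ?thesis .
qed

lemma apart_F1: "k \<le> CARD('n) \<Longrightarrow> apart k y \<in> F1 k"
  unfolding apart_def by (rule comb_F1)

lemma bpart_F2: "bpart k y \<in> F2 (CARD('n) - k)"
  unfolding bpart_def by (rule comb_F2) simp

lemma apart_id: assumes "k \<le> CARD('n)" "y \<in> F1 k" shows "apart k y = y"
  unfolding apart_def by (rule expand_sub[symmetric]) (use assms F1_coef in auto)

lemma coef_apart: assumes "l \<in> {CARD('n)-k+1..CARD('n)}" shows "coef l (apart k y) = coef l y"
  unfolding apart_def using assms by (subst coef_comb) auto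

lemma norm_bpart: "norm (bpart k y) \<le> (\<Sum>j\<in>{1..CARD('n)-k}. norm (coef j y))"
proof -
  have "norm (bpart k y) \<le> (\<Sum>j\<in>{1..CARD('n)-k}. norm (coef j y *s vv j))"
    unfolding bpart_def by (rule norm_sum)
  also have "\<dots> = (\<Sum>j\<in>{1..CARD('n)-k}. norm (coef j y))"
    by (intro sum.cong refl) (auto simp: norm_smult vv(2))
  finally show ?thesis .
qed

end

context setting begin

lemma ub_decomp: assumes k: "k \<le> CARD('n)"
  shows "\<exists>C>0. \<forall>B \<rho>. B \<in> Stab F1 F2 \<longrightarrow> 0 \<le> \<rho> \<longrightarrow> \<rho> \<le> 1 \<longrightarrow>
     (\<forall>j\<in>{1..<CARD('n)}. norm (mu F1 F2 B (j + 1) / mu F1 F2 B j) \<le> \<rho>) \<longrightarrow>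
     (\<forall>x\<in>F3 k. norm (bpart k (matrix_inv B *v x)) \<le> C * \<rho> * norm (apart k (matrix_inv B *v x)))"
proof -
  obtain c where c: "c > 0" "\<forall>x\<in>F3 k. c * norm x \<le> (\<Sum>l\<in>{CARD('n)-k+1..CARD('n)}. norm (coef l x))"
    using compact_bound[OF k] by blast
  obtain K where K: "K > 0" "\<forall>j\<in>{1..CARD('n)}. \<forall>x. norm (coef j x) \<le> K * norm x"
    using coef_bound by blast
  define C where "C = real CARD('n) * real CARD('n) * K * K / c"
  have "C > 0" unfolding C_def using c K by simp
  moreover have "norm (bpart k (matrix_inv B *v x)) \<le> C * \<rho> * norm (apart k (matrix_inv B *v x))"
    if BS: "B \<in> Stab F1 F2" and rho0: "0 \<le> \<rho>" and rho1: "\<rho> \<le> 1"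
      and rat: "\<forall>j\<in>{1..<CARD('n)}. norm (mu F1 F2 B (j + 1) / mu F1 F2 B j) \<le> \<rho>"
      and x: "x \<in> F3 k" for B \<rho> x
  proof -
    let ?y = "matrix_inv B *v x"
    let ?W = "{CARD('n)-k+1..CARD('n)}"
    let ?mu = "mu F1 F2 B"
    have cy: "coef j ?y = coef j x / ?mu j" if "j \<in> {1..CARD('n)}" for j
      using coef_D[OF BS that] .
    have sW: "(\<Sum>l\<in>?W. norm (coef l ?y)) \<le> real CARD('n) * (K * norm (apart k ?y))"
    proof -
      have "(\<Sum>l\<in>?W. norm (coef l ?y)) = (\<Sum>l\<in>?W. norm (coef l (apart k ?y)))"
        by (intro sum.cong refl) (simp add: coef_apart)
      also have "\<dots> \<le> real (card ?W) * (K * norm (apart k ?y))"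
        by (rule sum_bounded_above) (use K in auto)
      also have "\<dots> \<le> real CARD('n) * (K * norm (apart k ?y))"
        by (intro mult_right_mono) (use K in auto)
      finally show ?thesis .
    qed
    have each: "norm (coef j ?y) \<le> K / c * \<rho> * (\<Sum>l\<in>?W. norm (coef l ?y))"
      if j: "j \<in> {1..CARD('n)-k}" for j
    proof -
      have j': "j \<in> {1..CARD('n)}" using j by auto
      have mj: "norm (?mu j) > 0" using mu_nz[OF BS j'] by simp
      have "norm (coef j x) \<le> K * norm x" using K j' by blast
      also have "\<dots> \<le> K / c * (\<Sum>l\<in>?W. norm (coef l x))"
        using c x K by (simp add: field_simps)
      finally have 1: "norm (coef j x) \<le> K / c * (\<Sum>l\<in>?W. norm (coef l x))" .
      have 2: "norm (coef l x) / norm (?mu j) \<le> \<rho> * norm (coef l ?y)" if l: "l \<in> ?W" for l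
      proof -
        have l': "l \<in> {1..CARD('n)}" using l k by auto
        have ml: "norm (?mu l) > 0" using mu_nz[OF BS l'] by simp
        have "norm (?mu l) \<le> \<rho> * norm (?mu j)"
          by (rule mu_decay[OF BS rho1 rat]) (use j l in auto)
        then have "norm (coef l x) * norm (?mu l) \<le> norm (coef l x) * (\<rho> * norm (?mu j))"
          by (rule mult_left_mono) simp
        then show ?thesis using mj ml
          by (simp add: cy[OF l'] norm_divide field_simps)
      qed
      have "norm (coef j ?y) = norm (coef j x) / norm (?mu j)" by (simp add: cy[OF j'] norm_divide)
      also have "\<dots> \<le> K / c * (\<Sum>l\<in>?W. norm (coef l x)) / norm (?mu j)"
        by (rule divide_right_mono[OF 1]) simp
      also have "\<dots> = K / c * ((\<Sum>l\<in>?W. norm (coef l x)) / norm (?mu j))"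
        by simp
      also have "\<dots> = K / c * (\<Sum>l\<in>?W. norm (coef l x) / norm (?mu j))"
        by (simp only: sum_divide_distrib)
      also have "\<dots> \<le> K / c * (\<Sum>l\<in>?W. \<rho> * norm (coef l ?y))"
        using c K by (intro mult_left_mono sum_mono 2) auto
      also have "\<dots> = K / c * \<rho> * (\<Sum>l\<in>?W. norm (coef l ?y))"
        by (simp only: sum_distrib_left[symmetric] mult.assoc)
      finally show ?thesis .
    qed
    have "norm (bpart k ?y) \<le> (\<Sum>j\<in>{1..CARD('n)-k}. norm (coef j ?y))" by (rule norm_bpart)
    also have "\<dots> \<le> real (card {1..CARD('n)-k}) * (K / c * \<rho> * (\<Sum>l\<in>?W. norm (coef l ?y)))"
      by (rule sum_bounded_above) (rule each)
    also have "\<dots> \<le> real CARD('n) * (K / c * \<rho> * (\<Sum>l\<in>?W. norm (coef l ?y)))"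
      using c K rho0 by (intro mult_right_mono mult_nonneg_nonneg sum_nonneg) auto
    also have "\<dots> \<le> real CARD('n) * (K / c * \<rho> * (real CARD('n) * (K * norm (apart k ?y))))"
      using c K rho0 sW by (intro mult_left_mono mult_nonneg_nonneg) auto
    also have "\<dots> = C * \<rho> * norm (apart k ?y)" unfolding C_def by (simp add: field_simps)
    finally show ?thesis .
  qed
  ultimately show ?thesis by blast
qed

end


lemma mv_scaleR: "(A::complex^'n^'n) *v (r *\<^sub>R x) = r *\<^sub>R (A *v x)"
  by (simp add: scaleR_cvec mv_scale)

context setting begin

lemma ub_hd: assumes k: "1 \<le> k" "k \<le> CARD('n)"
  shows "\<exists>\<rho>0>0. \<exists>C>0. \<forall>B \<rho>. B \<in> Stab F1 F2 \<longrightarrow> 0 \<le> \<rho> \<longrightarrow> \<rho> \<le> \<rho>0 \<longrightarrow>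
     (\<forall>j\<in>{1..<CARD('n)}. norm (mu F1 F2 B (j + 1) / mu F1 F2 B j) \<le> \<rho>) \<longrightarrow>
     hausdorff_dist (sphere 0 1 \<inter> (\<lambda>x. matrix_inv B *v x) ` F3 k) (sphere 0 1 \<inter> F1 k) \<le> C * \<rho>"
proof -
  obtain C1 where C1: "C1 > 0" "\<forall>B \<rho>. B \<in> Stab F1 F2 \<longrightarrow> 0 \<le> \<rho> \<longrightarrow> \<rho> \<le> 1 \<longrightarrow>
     (\<forall>j\<in>{1..<CARD('n)}. norm (mu F1 F2 B (j + 1) / mu F1 F2 B j) \<le> \<rho>) \<longrightarrow>
     (\<forall>x\<in>F3 k. norm (bpart k (matrix_inv B *v x)) \<le> C1 * \<rho> * norm (apart k (matrix_inv B *v x)))"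
    using ub_decomp[OF k(2)] by blast
  define \<rho>0 where "\<rho>0 = min 1 (1 / (2 * C1))"
  have "\<rho>0 > 0" unfolding \<rho>0_def using C1 by simp
  moreover have "hausdorff_dist (sphere 0 1 \<inter> (\<lambda>x. matrix_inv B *v x) ` F3 k) (sphere 0 1 \<inter> F1 k) \<le> (4 * C1) * \<rho>"
    if BS: "B \<in> Stab F1 F2" and r0: "0 \<le> \<rho>" and r1: "\<rho> \<le> \<rho>0"
      and rat: "\<forall>j\<in>{1..<CARD('n)}. norm (mu F1 F2 B (j + 1) / mu F1 F2 B j) \<le> \<rho>" for B \<rho>
  proof -
    let ?D = "matrix_inv B"
    let ?A = "sphere 0 1 \<inter> (\<lambda>x. ?D *v x) ` F3 k"
    let ?F = "sphere 0 1 \<inter> F1 k"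
    define h where "h = C1 * \<rho>"
    have h0: "0 \<le> h" and h2: "h \<le> 1 / 2"
    proof -
      show "0 \<le> h" unfolding h_def using C1 r0 by simp
      have "\<rho> \<le> 1 / (2 * C1)" using r1 unfolding \<rho>0_def by simp
      then have "C1 * \<rho> \<le> C1 * (1 / (2 * C1))" using C1 by (intro mult_left_mono) auto
      then show "h \<le> 1 / 2" unfolding h_def using C1 by simp
    qed
    have r1': "\<rho> \<le> 1" using r1 unfolding \<rho>0_def by simp
    have bnd: "norm (bpart k (?D *v x)) \<le> h * norm (apart k (?D *v x))" if "x \<in> F3 k" for x
      using C1(2) BS r0 r1' rat that unfolding h_def by blast
    have sub_m: "CARD('n) - (CARD('n) - k) = k" using k by simp
    have part2: "\<exists>s\<in>?A. dist t s \<le> (4 * C1) * \<rho>" if t: "t \<in> ?F" for t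
    proof -
      have tF: "t \<in> F1 k" and tn: "norm t = 1" using t by auto
      have "B *v t \<in> ssum (F2 (CARD('n) - k)) (F3 (CARD('n) - (CARD('n) - k)))"
        using sum23[of "CARD('n) - k"] by simp
      then obtain p x where p: "p \<in> F2 (CARD('n) - k)" and x: "x \<in> F3 k" and w: "B *v t = p + x"
        unfolding ssum_def sub_m by blast
      let ?y = "?D *v x"
      have y: "?y = t - ?D *v p" using w DB[OF BS, of t] by (metis add_diff_cancel_left' mv_diff)
      have "apart k ?y = apart k t" unfolding apart_def
      proof (intro sum.cong refl)
        fix l assume l: "l \<in> {CARD('n)-k+1..CARD('n)}"
        then have l': "l \<in> {1..CARD('n)}" using k by auto
        have "coef l (?D *v p) = 0" using coef_D[OF BS l', of p] F2_coef[OF p] l k by auto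
        then show "coef l ?y *s vv l = coef l t *s vv l" using y by (simp add: coef_diff)
      qed
      then have ya: "apart k ?y = t" using apart_id[OF k(2) tF] by simp
      have yb: "?y = t + bpart k ?y" using split_ab[OF k(2), of ?y] ya by simp
      have nb: "norm (bpart k ?y) \<le> h" using bnd[OF x] ya tn by simp
      have "norm ?y \<ge> 1 / 2"
      proof -
        have "norm t \<le> norm ?y + norm (bpart k ?y)"
          using yb norm_triangle_ineq4[of ?y "bpart k ?y"] by (metis add_diff_cancel_right')
        then show ?thesis using tn nb h2 by simp
      qed
      then have yn: "?y \<noteq> 0" by auto
      define s where "s = (1 / norm ?y) *\<^sub>R ?y"
      have "s = ?D *v ((1 / norm ?y) *\<^sub>R x)" unfolding s_def by (simp add: mv_scaleR)
      moreover have "(1 / norm ?y) *\<^sub>R x \<in> F3 k" using x by (simp add: vsub_scaleR sub3)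
      moreover have "norm s = 1" unfolding s_def using yn by simp
      ultimately have sA: "s \<in> ?A" by auto
      have "dist t s \<le> 2 * norm (?y - t)" unfolding s_def by (rule norm_approx[OF tn yn])
      also have "\<dots> = 2 * norm (bpart k ?y)" using yb by (metis add_diff_cancel_left')
      also have "\<dots> \<le> 2 * h" using nb by simp
      also have "\<dots> \<le> (4 * C1) * \<rho>" unfolding h_def using C1 r0 by simp
      finally show ?thesis using sA by blast
    qed
    have part1: "\<exists>t\<in>?F. dist s t \<le> (4 * C1) * \<rho>" if s: "s \<in> ?A" for s
    proof -
      obtain x where x: "x \<in> F3 k" and sx: "s = ?D *v x" and sn: "norm s = 1" using s by auto
      define a where "a = apart k s"
      define b where "b = bpart k s"
      have sab: "s = a + b" unfolding a_def b_def by (rule split_ab[OF k(2)])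
      have nb: "norm b \<le> h * norm a" unfolding a_def b_def sx by (rule bnd[OF x])
      have "norm a \<le> 2"
      proof -
        have "norm a \<le> norm s + norm b" using sab norm_triangle_ineq4[of s b]
          by (metis add_diff_cancel_right')
        also have "\<dots> \<le> 1 + h * norm a" using sn nb by simp
        also have "\<dots> \<le> 1 + norm a / 2" using h2 mult_right_mono[OF h2 norm_ge_zero[of a]] by simp
        finally show ?thesis by simp
      qed
      have an: "a \<noteq> 0"
      proof
        assume "a = 0"
        then have "b = 0" using nb by simp
        then show False using sab sn \<open>a = 0\<close> by simp
      qed
      define t where "t = (1 / norm a) *\<^sub>R a"
      have "t \<in> ?F" unfolding t_def a_def using an apart_F1[OF k(2)]
        by (simp add: vsub_scaleR sub1 a_def)
      moreover have "dist s t \<le> 2 * norm (a - s)" unfolding t_def by (rule norm_approx[OF sn an])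
      moreover have "norm (a - s) = norm b" using sab by (simp add: norm_minus_commute)
      moreover have "2 * (h * norm a) \<le> (4 * C1) * \<rho>"
        using \<open>norm a \<le> 2\<close> mult_left_mono[OF \<open>norm a \<le> 2\<close> h0] unfolding h_def by simp
      ultimately show ?thesis using nb by (intro bexI[of _ t]) auto
    qed
    have vF: "vv CARD('n) \<in> ?F" using vv[of "CARD('n)"] vv_F1[of "CARD('n)" k] k by auto
    show ?thesis
    proof (rule hd_upper)
      show "?F \<noteq> {}" using vF by blast
      show "?A \<noteq> {}" using part2[OF vF] by blast
    qed (use part1 part2 in auto)
  qed
  moreover have "4 * C1 > 0" using C1 by simp
  ultimately show ?thesis by blast
qed

end


lemma arith_lb:
  fixes a0 Kp K t r :: real
  assumes "a0 > 0" "Kp > 0" "K > 0" "t \<ge> 0" "r \<le> K * t" "r \<ge> 0"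
  shows "min ((1 / (2 * K * a0 * Kp)) * r) (1 / (2 * Kp)) \<le> t / ((a0 + t) * Kp)"
proof (cases "t \<le> a0")
  case True
  have "(1 / (2 * K * a0 * Kp)) * r \<le> (1 / (2 * K * a0 * Kp)) * (K * t)"
    using assms by (intro mult_left_mono) auto
  also have "\<dots> = t / (2 * a0 * Kp)" using assms by (simp add: field_simps)
  also have "\<dots> \<le> t / ((a0 + t) * Kp)"
    using assms True by (intro divide_left_mono mult_right_mono mult_pos_pos) auto
  finally show ?thesis by simp
next
  case False
  have "1 / (2 * Kp) = (1/2) / Kp" by simp
  also have "\<dots> \<le> (t / (a0 + t)) / Kp"
    using assms False by (intro divide_right_mono) (auto simp: field_simps)
  also have "\<dots> = t / ((a0 + t) * Kp)" by simp
  finally show ?thesis by simp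
qed

context twoflags begin

lemma coef_zero: "coef j 0 = 0"
  using coef_scale[of j 0 0] by simp

lemma bpart_bound: assumes K: "\<forall>j\<in>{1..CARD('n)}. \<forall>x. norm (coef j x) \<le> K * norm x" "K > 0"
  shows "norm (bpart k x) \<le> (real CARD('n) * K) * norm x"
proof -
  have "norm (bpart k x) \<le> (\<Sum>j\<in>{1..CARD('n)-k}. norm (coef j x))" by (rule norm_bpart)
  also have "\<dots> \<le> real (card {1..CARD('n)-k}) * (K * norm x)"
    by (rule sum_bounded_above) (use K in auto)
  also have "\<dots> \<le> real CARD('n) * (K * norm x)"
    using K by (intro mult_right_mono) auto
  finally show ?thesis by simp
qed

end

context setting begin

lemma lb_hd: assumes i: "i \<in> {1..<CARD('n)}"
  shows "\<exists>\<alpha>>0. \<exists>\<beta>>0. \<forall>B. B \<in> Stab F1 F2 \<longrightarrow>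
     min (\<alpha> * norm (mu F1 F2 B (i + 1) / mu F1 F2 B i)) \<beta> \<le>
     hausdorff_dist (sphere 0 1 \<inter> (\<lambda>x. matrix_inv B *v x) ` F3 (CARD('n) - i)) (sphere 0 1 \<inter> F1 (CARD('n) - i))"
proof -
  define k where "k = CARD('n) - i"
  have k: "1 \<le> k" "k \<le> CARD('n)" "CARD('n) - k = i" using i unfolding k_def by auto
  have i1: "i \<in> {1..CARD('n)}" "i + 1 \<in> {1..CARD('n)}" using i by auto
  have "vv i \<in> proj_L F1 F2 i ` (F2 (i + 1) \<inter> F3 (CARD('n) - i))"
  proof -
    have "bij_betw (proj_L F1 F2 i) (F2 (i + 1) \<inter> F3 (CARD('n) - i)) (L i)" using pst i by blast
    then have "proj_L F1 F2 i ` (F2 (i + 1) \<inter> F3 (CARD('n) - i)) = L i" by (rule bij_betw_imp_surj_on)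
    then show ?thesis using vv(1)[OF i1(1)] by simp
  qed
  then obtain y where py': "vv i = proj_L F1 F2 i y" and yy: "y \<in> F2 (i + 1) \<inter> F3 (CARD('n) - i)"
    by (rule imageE)
  have y2: "y \<in> F2 (i + 1)" and y3: "y \<in> F3 k" and py: "proj_L F1 F2 i y = vv i"
    using yy py' unfolding k_def by auto
  have ci: "coef i y = 1"
  proof -
    have "coef i (proj_L F1 F2 i y) = coef i y"
      unfolding proj_eq[OF i1(1)] by (simp add: coef_scale coef_vv[OF i1(1) i1(1)])
    then show ?thesis using py coef_vv[OF i1(1) i1(1)] by simp
  qed
  have cz: "coef j y = 0" if "j \<in> {i+2..CARD('n)}" for j
    using F2_coef[OF y2, of j] that i by auto
  have a0: "coef (i + 1) y \<noteq> 0"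
  proof
    assume h: "coef (i + 1) y = 0"
    have "y = (\<Sum>j\<in>{1..i}. coef j y *s vv j)"
    proof (rule expand_sub)
      fix j assume "j \<in> {1..CARD('n)} - {1..i}"
      then have "j = i + 1 \<or> j \<in> {i+2..CARD('n)}" by auto
      then show "coef j y = 0" using h cz by auto
    qed (use i in auto)
    also have "\<dots> \<in> F2 i" by (rule comb_F2) (use i in auto)
    finally have "y \<in> F2 i" .
    moreover have "y \<in> F3 (CARD('n) - i)" using y3 unfolding k_def .
    ultimately have "y = 0" using int23[of i] i by auto
    then show False using ci coef_zero by simp
  qed
  define a0 where "a0 = norm (coef (i + 1) y)"
  have a0p: "a0 > 0" unfolding a0_def using a0 by simp
  obtain K where K: "K > 0" "\<forall>j\<in>{1..CARD('n)}. \<forall>x. norm (coef j x) \<le> K * norm x"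
    using coef_bound by blast
  define Kp where "Kp = real CARD('n) * K"
  have Kp: "Kp > 0" unfolding Kp_def using K by simp
  define \<alpha> where "\<alpha> = 1 / (2 * K * a0 * Kp)"
  define \<beta> where "\<beta> = 1 / (2 * Kp)"
  have main: "min (\<alpha> * norm (mu F1 F2 B (i + 1) / mu F1 F2 B i)) \<beta> \<le>
     hausdorff_dist (sphere 0 1 \<inter> (\<lambda>x. matrix_inv B *v x) ` F3 k) (sphere 0 1 \<inter> F1 k)"
    if BS: "B \<in> Stab F1 F2" for B
  proof -
    let ?D = "matrix_inv B"
    let ?mu = "mu F1 F2 B"
    let ?A = "sphere 0 1 \<inter> (\<lambda>x. ?D *v x) ` F3 k"
    let ?F = "sphere 0 1 \<inter> F1 k"
    define z where "z = ?D *v (?mu (i + 1) *s y)"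
    have cz': "coef j z = ?mu (i + 1) * coef j y / ?mu j" if "j \<in> {1..CARD('n)}" for j
      unfolding z_def using coef_D[OF BS that] by (simp add: coef_scale)
    have zi1: "coef (i + 1) z = coef (i + 1) y" using cz'[OF i1(2)] mu_nz[OF BS i1(2)] by simp
    have zi: "coef i z = ?mu (i + 1) / ?mu i" using cz'[OF i1(1)] ci by simp
    have az: "apart k z = coef (i + 1) y *s vv (i + 1)"
    proof -
      have "apart k z = (\<Sum>l\<in>{i+1}. coef l z *s vv l)" unfolding apart_def
      proof (rule sum.mono_neutral_right)
        show "\<forall>l\<in>{CARD('n) - k + 1..CARD('n)} - {i + 1}. coef l z *s vv l = 0"
        proof
          fix l assume l: "l \<in> {CARD('n) - k + 1..CARD('n)} - {i + 1}"
          then have "l \<in> {i+2..CARD('n)}" "l \<in> {1..CARD('n)}" using k by auto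
          then show "coef l z *s vv l = 0" using cz'[of l] cz[of l] by simp
        qed
      qed (use k i in auto)
      then show ?thesis using zi1 by simp
    qed
    define t where "t = norm (bpart k z)"
    have nz: "norm z \<le> a0 + t"
    proof -
      have "norm z = norm (apart k z + bpart k z)" using split_ab[OF k(2), of z] by simp
      also have "\<dots> \<le> norm (apart k z) + norm (bpart k z)" by (rule norm_triangle_ineq)
      also have "norm (apart k z) = a0" unfolding az a0_def using vv(2)[OF i1(2)] by (simp add: norm_smult)
      finally show ?thesis unfolding t_def by simp
    qed
    have rt: "norm (?mu (i + 1) / ?mu i) \<le> K * t"
    proof -
      have "coef i (bpart k z) = coef i z" unfolding bpart_def using i1 k
        by (subst coef_comb) auto
      then have "norm (?mu (i + 1) / ?mu i) = norm (coef i (bpart k z))" using zi by simp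
      also have "\<dots> \<le> K * t" using K i1 unfolding t_def by blast
      finally show ?thesis .
    qed
    have zn: "z \<noteq> 0" using zi1 a0 coef_zero by auto
    define u where "u = (1 / norm z) *\<^sub>R z"
    have uA: "u \<in> ?A"
    proof -
      have "u = ?D *v ((1 / norm z) *\<^sub>R (?mu (i + 1) *s y))" unfolding u_def z_def by (simp add: mv_scaleR)
      moreover have "(1 / norm z) *\<^sub>R (?mu (i + 1) *s y) \<in> F3 k"
        using y3 by (simp add: vsub_scaleR sub3 vec.subspace_scale)
      moreover have "norm u = 1" unfolding u_def using zn by simp
      ultimately show ?thesis by auto
    qed
    have bu: "bpart k u = (1 / norm z) *\<^sub>R bpart k z"
    proof -
      have "bpart k u = (\<Sum>l\<in>{1..CARD('n)-k}. (1 / norm z) *\<^sub>R (coef l z *s vv l))"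
        unfolding u_def bpart_def coef_scaleR
        by (intro sum.cong refl) (simp add: scaleR_cvec scaleR_conv_of_real vector_smult_assoc)
      then show ?thesis unfolding bpart_def scaleR_sum_right .
    qed
    have dist_lb: "t / ((a0 + t) * Kp) \<le> dist u s" if s: "s \<in> ?F" for s
    proof -
      have bs: "bpart k (u - s) = bpart k u" unfolding bpart_def
      proof (intro sum.cong refl)
        fix j assume j: "j \<in> {1..CARD('n) - k}"
        have "coef j s = 0" using F1_coef[of s k j] s j k by auto
        then show "coef j (u - s) *s vv j = coef j u *s vv j" by (simp add: coef_diff)
      qed
      have "t / norm z = norm (bpart k (u - s))" unfolding bs bu t_def using zn by simp
      also have "\<dots> \<le> Kp * norm (u - s)" unfolding Kp_def by (rule bpart_bound[OF K(2) K(1)])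
      finally have 1: "t / norm z \<le> Kp * dist u s" by (simp add: dist_norm)
      have t0: "t \<ge> 0" unfolding t_def by simp
      have p1: "0 < norm z * Kp" using zn Kp by simp
      have p2: "norm z * Kp \<le> (a0 + t) * Kp" using nz Kp by simp
      have "t / ((a0 + t) * Kp) \<le> t / (norm z * Kp)"
        by (rule divide_left_mono[OF p2 t0]) (use p1 p2 in simp)
      also have "\<dots> = (t / norm z) / Kp" by simp
      also have "\<dots> \<le> dist u s"
      proof -
        have "t / norm z \<le> dist u s * Kp" using 1 by (simp only: mult.commute)
        then show ?thesis using pos_divide_le_eq[OF Kp] by blast
      qed
      finally show ?thesis .
    qed
    have "min (\<alpha> * norm (?mu (i + 1) / ?mu i)) \<beta> \<le> t / ((a0 + t) * Kp)"
      unfolding \<alpha>_def \<beta>_def by (rule arith_lb[OF a0p Kp K(1) _ rt]) (auto simp: t_def)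
    also have "\<dots> \<le> hausdorff_dist ?A ?F"
    proof (rule hd_lower[OF uA])
      have vF: "vv CARD('n) \<in> ?F" using vv[of "CARD('n)"] vv_F1[of "CARD('n)" k] k by auto
      then show "?F \<noteq> {}" by blast
      show "bdd_above ((\<lambda>a. infdist a ?F) ` ?A)" by (rule bdd_sphere[OF _ vF]) auto
    qed (rule dist_lb)
    finally show ?thesis .
  qed
  have ab: "\<alpha> > 0" "\<beta> > 0" unfolding \<alpha>_def \<beta>_def using K a0p Kp by auto
  have all: "\<forall>B. B \<in> Stab F1 F2 \<longrightarrow> min (\<alpha> * norm (mu F1 F2 B (i + 1) / mu F1 F2 B i)) \<beta> \<le>
     hausdorff_dist (sphere 0 1 \<inter> (\<lambda>x. matrix_inv B *v x) ` F3 (CARD('n) - i)) (sphere 0 1 \<inter> F1 (CARD('n) - i))"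
    using main unfolding k_def by blast
  show ?thesis using ab all by blast
qed

end


lemma min_max_consts:
  fixes a :: "nat \<Rightarrow> real"
  assumes "\<forall>i\<in>S. a i > 0" "finite S"
  shows "\<exists>m>0. \<forall>i\<in>S. m \<le> a i" "\<exists>M>0. \<forall>i\<in>S. a i \<le> M"
proof -
  show "\<exists>m>0. \<forall>i\<in>S. m \<le> a i"
  proof (intro exI[of _ "Min (insert 1 (a ` S))"] conjI ballI)
    show "Min (insert 1 (a ` S)) > 0" using assms by (subst Min_gr_iff) auto
    show "Min (insert 1 (a ` S)) \<le> a i" if "i \<in> S" for i using assms that by (intro Min_le) auto
  qed
  show "\<exists>M>0. \<forall>i\<in>S. a i \<le> M"
  proof (intro exI[of _ "Max (insert 1 (a ` S))"] conjI ballI)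
    show "Max (insert 1 (a ` S)) > 0" using assms by (subst Max_gr_iff) auto
    show "a i \<le> Max (insert 1 (a ` S))" if "i \<in> S" for i using assms that by (intro Max_ge) auto
  qed
qed

context twoflags begin

lemma rm_nonneg: "0 \<le> ratio_max F1 F2 B"
  unfolding ratio_max_def by (rule Max_ge) auto

lemma rm_ge: "i \<in> {1..<CARD('n)} \<Longrightarrow> norm (mu F1 F2 B (i + 1) / mu F1 F2 B i) \<le> ratio_max F1 F2 B"
  unfolding ratio_max_def by (rule Max_ge) auto

lemma rm_cases: "ratio_max F1 F2 B = 0 \<or> (\<exists>i\<in>{1..<CARD('n)}. ratio_max F1 F2 B = norm (mu F1 F2 B (i + 1) / mu F1 F2 B i))"
proof -
  have "ratio_max F1 F2 B \<in> insert 0 ((\<lambda>i. norm (mu F1 F2 B (i + 1) / mu F1 F2 B i)) ` {1..<CARD('n)})"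
    unfolding ratio_max_def by (rule Max_in) auto
  then show ?thesis by auto
qed

end

context setting begin

lemma fd_eq: "flag_dist (flag_act (matrix_inv B) F3) F1 =
  (\<Sum>k\<in>{1..<CARD('n)}. hausdorff_dist (sphere 0 1 \<inter> (\<lambda>x. matrix_inv B *v x) ` F3 k) (sphere 0 1 \<inter> F1 k))"
  unfolding flag_dist_def flag_act_def by (rule refl)

lemma hd_nn: assumes BS: "B \<in> Stab F1 F2" and k: "k \<in> {1..<CARD('n)}"
  shows "0 \<le> hausdorff_dist (sphere 0 1 \<inter> (\<lambda>x. matrix_inv B *v x) ` F3 k) (sphere 0 1 \<inter> F1 k)"
proof (rule hd_nonneg)
  have k1: "1 \<le> k" "k \<le> CARD('n)" using k by auto
  then have "min k CARD('n) = k" by (rule_tac min_absorb1) 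
  then have "vec.dim (F3 k) = k" using dim3[of k] by (rule_tac trans) 
  then have "vec.dim (F3 k) \<noteq> 0" using k1 by linarith
  have "\<not> F3 k \<subseteq> {0}"
  proof
    assume "F3 k \<subseteq> {0}"
    then have "vec.dim (F3 k) = 0" by (rule vec.dim_eq_0[THEN iffD2])
    with \<open>vec.dim (F3 k) \<noteq> 0\<close> show False by contradiction
  qed
  then obtain x where x: "x \<in> F3 k" "x \<noteq> 0" by blast
  define y where "y = matrix_inv B *v x"
  have yn: "y \<noteq> 0"
  proof
    assume "y = 0"
    then have "B *v y = 0" by simp
    then show False using BD[OF BS, of x] x unfolding y_def by simp
  qed
  define s where "s = (1 / norm y) *\<^sub>R x"
  have sF: "s \<in> F3 k" unfolding s_def using x by (simp add: vsub_scaleR sub3)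
  have "matrix_inv B *v s = (1 / norm y) *\<^sub>R y" unfolding s_def y_def by (rule mv_scaleR)
  moreover have "norm ((1 / norm y) *\<^sub>R y) = 1" using yn by simp
  ultimately have m2: "norm (matrix_inv B *v s) = 1" by simp
  have m1: "matrix_inv B *v s \<in> (\<lambda>x. matrix_inv B *v x) ` F3 k" using sF by (rule imageI)
  have "matrix_inv B *v s \<in> sphere 0 1 \<inter> (\<lambda>x. matrix_inv B *v x) ` F3 k"
    using m1 m2 by simp
  then show "sphere 0 1 \<inter> (\<lambda>x. matrix_inv B *v x) ` F3 k \<noteq> {}" by blast
  have vF: "vv CARD('n) \<in> sphere 0 1 \<inter> F1 k" using vv[of "CARD('n)"] vv_F1[of "CARD('n)" k] k by auto
  show "bdd_above ((\<lambda>a. infdist a (sphere 0 1 \<inter> F1 k)) ` (sphere 0 1 \<inter> (\<lambda>x. matrix_inv B *v x) ` F3 k))"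
    by (rule bdd_sphere[OF _ vF]) auto
qed

lemma fd_nn: "B \<in> Stab F1 F2 \<Longrightarrow> 0 \<le> flag_dist (flag_act (matrix_inv B) F3) F1"
  unfolding fd_eq by (intro sum_nonneg hd_nn) auto

lemma low_all: "\<exists>\<alpha>>0. \<exists>\<beta>>0. \<forall>B. B \<in> Stab F1 F2 \<longrightarrow>
   min (\<alpha> * ratio_max F1 F2 B) \<beta> \<le> flag_dist (flag_act (matrix_inv B) F3) F1"
proof -
  have "\<forall>i\<in>{1..<CARD('n)}. \<exists>ab. fst ab > 0 \<and> snd ab > 0 \<and> (\<forall>B. B \<in> Stab F1 F2 \<longrightarrow>
     min (fst ab * norm (mu F1 F2 B (i + 1) / mu F1 F2 B i)) (snd ab) \<le>
     hausdorff_dist (sphere 0 1 \<inter> (\<lambda>x. matrix_inv B *v x) ` F3 (CARD('n) - i)) (sphere 0 1 \<inter> F1 (CARD('n) - i)))"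
  proof
    fix i assume "i \<in> {1..<CARD('n)}"
    from lb_hd[OF this] obtain \<alpha> \<beta> where "\<alpha> > 0" "\<beta> > 0" "\<forall>B. B \<in> Stab F1 F2 \<longrightarrow>
     min (\<alpha> * norm (mu F1 F2 B (i + 1) / mu F1 F2 B i)) \<beta> \<le>
     hausdorff_dist (sphere 0 1 \<inter> (\<lambda>x. matrix_inv B *v x) ` F3 (CARD('n) - i)) (sphere 0 1 \<inter> F1 (CARD('n) - i))"
      by blast
    then show "\<exists>ab. fst ab > 0 \<and> snd ab > 0 \<and> (\<forall>B. B \<in> Stab F1 F2 \<longrightarrow>
     min (fst ab * norm (mu F1 F2 B (i + 1) / mu F1 F2 B i)) (snd ab) \<le>
     hausdorff_dist (sphere 0 1 \<inter> (\<lambda>x. matrix_inv B *v x) ` F3 (CARD('n) - i)) (sphere 0 1 \<inter> F1 (CARD('n) - i)))"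
      by (intro exI[of _ "(\<alpha>, \<beta>)"]) simp
  qed
  then obtain ab where ab: "\<forall>i\<in>{1..<CARD('n)}. fst (ab i) > 0 \<and> snd (ab i) > 0 \<and> (\<forall>B. B \<in> Stab F1 F2 \<longrightarrow>
     min (fst (ab i) * norm (mu F1 F2 B (i + 1) / mu F1 F2 B i)) (snd (ab i)) \<le>
     hausdorff_dist (sphere 0 1 \<inter> (\<lambda>x. matrix_inv B *v x) ` F3 (CARD('n) - i)) (sphere 0 1 \<inter> F1 (CARD('n) - i)))"
    by (rule bchoice[THEN exE]) assumption
  obtain \<alpha> where \<alpha>: "\<alpha> > 0" "\<forall>i\<in>{1..<CARD('n)}. \<alpha> \<le> fst (ab i)"
  proof -
    have "\<forall>i\<in>{1..<CARD('n)}. fst (ab i) > 0" using ab by blast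
    from min_max_consts(1)[OF this finite_atLeastLessThan] show ?thesis using that by blast
  qed
  obtain \<beta> where \<beta>: "\<beta> > 0" "\<forall>i\<in>{1..<CARD('n)}. \<beta> \<le> snd (ab i)"
  proof -
    have "\<forall>i\<in>{1..<CARD('n)}. snd (ab i) > 0" using ab by blast
    from min_max_consts(1)[OF this finite_atLeastLessThan] show ?thesis using that by blast
  qed
  have "min (\<alpha> * ratio_max F1 F2 B) \<beta> \<le> flag_dist (flag_act (matrix_inv B) F3) F1"
    if BS: "B \<in> Stab F1 F2" for B
  proof (cases "ratio_max F1 F2 B = 0")
    case True
    then show ?thesis using fd_nn[OF BS] \<beta> by simp
  next
    case False
    then obtain i where i: "i \<in> {1..<CARD('n)}" and ri: "ratio_max F1 F2 B = norm (mu F1 F2 B (i + 1) / mu F1 F2 B i)"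
      using rm_cases by blast
    let ?r = "norm (mu F1 F2 B (i + 1) / mu F1 F2 B i)"
    have "min (\<alpha> * ?r) \<beta> \<le> min (fst (ab i) * ?r) (snd (ab i))"
      using \<alpha> \<beta> i by (intro min.mono mult_right_mono) auto
    also have "\<dots> \<le> hausdorff_dist (sphere 0 1 \<inter> (\<lambda>x. matrix_inv B *v x) ` F3 (CARD('n) - i)) (sphere 0 1 \<inter> F1 (CARD('n) - i))"
      by (rule conjunct2[OF conjunct2[OF bspec[OF ab i]], rule_format, OF BS])
    also have "\<dots> \<le> flag_dist (flag_act (matrix_inv B) F3) F1"
      unfolding fd_eq using i
      by (intro member_le_sum[where i = "CARD('n) - i"]) (auto intro: hd_nn[OF BS])
    finally show ?thesis using ri by simp
  qed
  then show ?thesis using \<alpha> \<beta> by blast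
qed

lemma up_all: "\<exists>\<rho>0>0. \<exists>C>0. \<forall>B. B \<in> Stab F1 F2 \<longrightarrow> ratio_max F1 F2 B \<le> \<rho>0 \<longrightarrow>
   flag_dist (flag_act (matrix_inv B) F3) F1 \<le> C * ratio_max F1 F2 B"
proof -
  have "\<forall>k\<in>{1..<CARD('n)}. \<exists>rc. fst rc > 0 \<and> snd rc > 0 \<and> (\<forall>B \<rho>. B \<in> Stab F1 F2 \<longrightarrow> 0 \<le> \<rho> \<longrightarrow> \<rho> \<le> fst rc \<longrightarrow>
     (\<forall>j\<in>{1..<CARD('n)}. norm (mu F1 F2 B (j + 1) / mu F1 F2 B j) \<le> \<rho>) \<longrightarrow>
     hausdorff_dist (sphere 0 1 \<inter> (\<lambda>x. matrix_inv B *v x) ` F3 k) (sphere 0 1 \<inter> F1 k) \<le> snd rc * \<rho>)"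
  proof
    fix k assume "k \<in> {1..<CARD('n)}"
    then have "1 \<le> k" "k \<le> CARD('n)" by auto
    from ub_hd[OF this] obtain \<rho>0 C where "\<rho>0 > 0" "C > 0" "\<forall>B \<rho>. B \<in> Stab F1 F2 \<longrightarrow> 0 \<le> \<rho> \<longrightarrow> \<rho> \<le> \<rho>0 \<longrightarrow>
     (\<forall>j\<in>{1..<CARD('n)}. norm (mu F1 F2 B (j + 1) / mu F1 F2 B j) \<le> \<rho>) \<longrightarrow>
     hausdorff_dist (sphere 0 1 \<inter> (\<lambda>x. matrix_inv B *v x) ` F3 k) (sphere 0 1 \<inter> F1 k) \<le> C * \<rho>"
      by blast
    then show "\<exists>rc. fst rc > 0 \<and> snd rc > 0 \<and> (\<forall>B \<rho>. B \<in> Stab F1 F2 \<longrightarrow> 0 \<le> \<rho> \<longrightarrow> \<rho> \<le> fst rc \<longrightarrow>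
     (\<forall>j\<in>{1..<CARD('n)}. norm (mu F1 F2 B (j + 1) / mu F1 F2 B j) \<le> \<rho>) \<longrightarrow>
     hausdorff_dist (sphere 0 1 \<inter> (\<lambda>x. matrix_inv B *v x) ` F3 k) (sphere 0 1 \<inter> F1 k) \<le> snd rc * \<rho>)"
      by (intro exI[of _ "(\<rho>0, C)"]) simp
  qed
  then obtain rc where rc: "\<forall>k\<in>{1..<CARD('n)}. fst (rc k) > 0 \<and> snd (rc k) > 0 \<and> (\<forall>B \<rho>. B \<in> Stab F1 F2 \<longrightarrow> 0 \<le> \<rho> \<longrightarrow> \<rho> \<le> fst (rc k) \<longrightarrow>
     (\<forall>j\<in>{1..<CARD('n)}. norm (mu F1 F2 B (j + 1) / mu F1 F2 B j) \<le> \<rho>) \<longrightarrow>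
     hausdorff_dist (sphere 0 1 \<inter> (\<lambda>x. matrix_inv B *v x) ` F3 k) (sphere 0 1 \<inter> F1 k) \<le> snd (rc k) * \<rho>)"
    by (rule bchoice[THEN exE]) assumption
  obtain \<rho>0 where \<rho>0: "\<rho>0 > 0" "\<forall>k\<in>{1..<CARD('n)}. \<rho>0 \<le> fst (rc k)"
  proof -
    have "\<forall>k\<in>{1..<CARD('n)}. fst (rc k) > 0" using rc by blast
    from min_max_consts(1)[OF this finite_atLeastLessThan] show ?thesis using that by blast
  qed
  obtain C where C: "C > 0" "\<forall>k\<in>{1..<CARD('n)}. snd (rc k) \<le> C"
  proof -
    have "\<forall>k\<in>{1..<CARD('n)}. snd (rc k) > 0" using rc by blast
    from min_max_consts(2)[OF this finite_atLeastLessThan] show ?thesis using that by blast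
  qed
  have "flag_dist (flag_act (matrix_inv B) F3) F1 \<le> (real CARD('n) * C) * ratio_max F1 F2 B"
    if BS: "B \<in> Stab F1 F2" and small: "ratio_max F1 F2 B \<le> \<rho>0" for B
  proof -
    let ?r = "ratio_max F1 F2 B"
    have each: "hausdorff_dist (sphere 0 1 \<inter> (\<lambda>x. matrix_inv B *v x) ` F3 k) (sphere 0 1 \<inter> F1 k) \<le> C * ?r"
      if k: "k \<in> {1..<CARD('n)}" for k
    proof -
      have "hausdorff_dist (sphere 0 1 \<inter> (\<lambda>x. matrix_inv B *v x) ` F3 k) (sphere 0 1 \<inter> F1 k) \<le> snd (rc k) * ?r"
      proof (rule conjunct2[OF conjunct2[OF bspec[OF rc k]], rule_format, OF BS rm_nonneg])
        show "ratio_max F1 F2 B \<le> fst (rc k)" using small \<rho>0(2) k by (meson order.trans)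
      next
        fix j assume "j \<in> {1..<CARD('n)}"
        then show "norm (mu F1 F2 B (j + 1) / mu F1 F2 B j) \<le> ratio_max F1 F2 B" by (rule rm_ge)
      qed
      also have "\<dots> \<le> C * ?r" using C k rm_nonneg[of B] by (intro mult_right_mono) auto
      finally show ?thesis .
    qed
    have "flag_dist (flag_act (matrix_inv B) F3) F1 \<le> real (card {1..<CARD('n)}) * (C * ?r)"
      unfolding fd_eq by (rule sum_bounded_above) (rule each)
    also have "\<dots> \<le> real CARD('n) * (C * ?r)"
      using C rm_nonneg[of B] by (intro mult_right_mono) auto
    finally show ?thesis by simp
  qed
  moreover have "real CARD('n) * C > 0" using C by simp
  ultimately show ?thesis using \<rho>0 by blast
qed

end


context setting begin

lemma final:
  shows "(\<forall>B :: nat \<Rightarrow> complex^'n^'n. (\<forall>n. B n \<in> Stab F1 F2) \<longrightarrow>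
            ((\<lambda>n. flag_dist (flag_act (matrix_inv (B n)) F3) F1) \<longlonglongrightarrow> 0
             \<longleftrightarrow> (\<lambda>n. ratio_max F1 F2 (B n)) \<longlonglongrightarrow> 0))
       \<and> (\<exists>C>0. \<forall>B :: nat \<Rightarrow> complex^'n^'n. (\<forall>n. B n \<in> Stab F1 F2) \<longrightarrow>
            (\<lambda>n. flag_dist (flag_act (matrix_inv (B n)) F3) F1) \<longlonglongrightarrow> 0 \<longrightarrow>
            (\<forall>\<^sub>F n in sequentially.
               ratio_max F1 F2 (B n) / C \<le> flag_dist (flag_act (matrix_inv (B n)) F3) F1 \<and>
               flag_dist (flag_act (matrix_inv (B n)) F3) F1 \<le> C * ratio_max F1 F2 (B n)))"
proof -
  obtain \<alpha> \<beta> where \<alpha>: "\<alpha> > 0" and \<beta>: "\<beta> > 0" and low: "\<forall>B. B \<in> Stab F1 F2 \<longrightarrow>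
   min (\<alpha> * ratio_max F1 F2 B) \<beta> \<le> flag_dist (flag_act (matrix_inv B) F3) F1"
    using low_all by blast
  obtain \<rho>0 C where \<rho>0: "\<rho>0 > 0" and C: "C > 0" and up: "\<forall>B. B \<in> Stab F1 F2 \<longrightarrow> ratio_max F1 F2 B \<le> \<rho>0 \<longrightarrow>
   flag_dist (flag_act (matrix_inv B) F3) F1 \<le> C * ratio_max F1 F2 B"
    using up_all by blast
  have low': "\<alpha> * ratio_max F1 F2 B \<le> flag_dist (flag_act (matrix_inv B) F3) F1"
    if "B \<in> Stab F1 F2" "flag_dist (flag_act (matrix_inv B) F3) F1 < \<beta>" for B
    using low that by (cases "\<alpha> * ratio_max F1 F2 B \<le> \<beta>") (auto simp: min_def)
  have part1: "(\<lambda>n. ratio_max F1 F2 (B n)) \<longlonglongrightarrow> 0" and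
    ev1: "\<forall>\<^sub>F n in sequentially. \<alpha> * ratio_max F1 F2 (B n) \<le> flag_dist (flag_act (matrix_inv (B n)) F3) F1"
    if Bs: "\<forall>n. B n \<in> Stab F1 F2" and f0: "(\<lambda>n. flag_dist (flag_act (matrix_inv (B n)) F3) F1) \<longlonglongrightarrow> 0"
    for B :: "nat \<Rightarrow> complex^'n^'n"
  proof -
    have "\<forall>\<^sub>F n in sequentially. flag_dist (flag_act (matrix_inv (B n)) F3) F1 < \<beta>"
      using order_tendstoD(2)[OF f0 \<beta>] .
    then show ev: "\<forall>\<^sub>F n in sequentially. \<alpha> * ratio_max F1 F2 (B n) \<le> flag_dist (flag_act (matrix_inv (B n)) F3) F1"
      by eventually_elim (use Bs low' in blast)
    show "(\<lambda>n. ratio_max F1 F2 (B n)) \<longlonglongrightarrow> 0"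
    proof (rule tendsto_sandwich[of "\<lambda>n. 0" _ _ "\<lambda>n. flag_dist (flag_act (matrix_inv (B n)) F3) F1 / \<alpha>"])
      show "\<forall>\<^sub>F n in sequentially. 0 \<le> ratio_max F1 F2 (B n)" by (simp add: rm_nonneg)
      show "\<forall>\<^sub>F n in sequentially. ratio_max F1 F2 (B n) \<le> flag_dist (flag_act (matrix_inv (B n)) F3) F1 / \<alpha>"
        using ev by eventually_elim (use \<alpha> in \<open>simp add: field_simps mult.commute\<close>)
      show "((\<lambda>n. flag_dist (flag_act (matrix_inv (B n)) F3) F1 / \<alpha>) \<longlongrightarrow> 0) sequentially"
        using tendsto_divide_zero[OF f0] .
    qed simp
  qed
  have part1b: "(\<lambda>n. flag_dist (flag_act (matrix_inv (B n)) F3) F1) \<longlonglongrightarrow> 0"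
    if Bs: "\<forall>n. B n \<in> Stab F1 F2" and g0: "(\<lambda>n. ratio_max F1 F2 (B n)) \<longlonglongrightarrow> 0"
    for B :: "nat \<Rightarrow> complex^'n^'n"
  proof (rule tendsto_sandwich[of "\<lambda>n. 0" _ _ "\<lambda>n. C * ratio_max F1 F2 (B n)"])
    show "\<forall>\<^sub>F n in sequentially. 0 \<le> flag_dist (flag_act (matrix_inv (B n)) F3) F1"
      using fd_nn Bs by simp
    have "\<forall>\<^sub>F n in sequentially. ratio_max F1 F2 (B n) < \<rho>0"
      using order_tendstoD(2)[OF g0 \<rho>0] .
    then show "\<forall>\<^sub>F n in sequentially. flag_dist (flag_act (matrix_inv (B n)) F3) F1 \<le> C * ratio_max F1 F2 (B n)"
      by eventually_elim (use Bs up in auto)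
    show "((\<lambda>n. C * ratio_max F1 F2 (B n)) \<longlongrightarrow> 0) sequentially"
      using tendsto_mult_right_zero[OF g0] .
  qed simp
  show ?thesis
  proof (intro conjI allI impI iffI)
    fix B :: "nat \<Rightarrow> complex^'n^'n"
    assume Bs: "\<forall>n. B n \<in> Stab F1 F2"
    {
      assume "(\<lambda>n. flag_dist (flag_act (matrix_inv (B n)) F3) F1) \<longlonglongrightarrow> 0"
      then show "(\<lambda>n. ratio_max F1 F2 (B n)) \<longlonglongrightarrow> 0" using part1 Bs by blast
    }
    {
      assume "(\<lambda>n. ratio_max F1 F2 (B n)) \<longlonglongrightarrow> 0"
      then show "(\<lambda>n. flag_dist (flag_act (matrix_inv (B n)) F3) F1) \<longlonglongrightarrow> 0" using part1b Bs by blast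
    }
  next
    define C' where "C' = max C (1 / \<alpha>)"
    have C': "C' > 0" "C \<le> C'" "1 / C' \<le> \<alpha>"
    proof -
      show cp: "C' > 0" "C \<le> C'" unfolding C'_def using C by auto
      have "1 / \<alpha> \<le> C'" unfolding C'_def by simp
      then have "\<alpha> * (1 / \<alpha>) \<le> \<alpha> * C'" using \<alpha> by (intro mult_left_mono) auto
      then have "1 \<le> \<alpha> * C'" using \<alpha> by simp
      then show "1 / C' \<le> \<alpha>" using cp(1) by (simp add: divide_le_eq mult.commute)
    qed
    show "\<exists>C>0. \<forall>B :: nat \<Rightarrow> complex^'n^'n. (\<forall>n. B n \<in> Stab F1 F2) \<longrightarrow>
            (\<lambda>n. flag_dist (flag_act (matrix_inv (B n)) F3) F1) \<longlonglongrightarrow> 0 \<longrightarrow>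
            (\<forall>\<^sub>F n in sequentially.
               ratio_max F1 F2 (B n) / C \<le> flag_dist (flag_act (matrix_inv (B n)) F3) F1 \<and>
               flag_dist (flag_act (matrix_inv (B n)) F3) F1 \<le> C * ratio_max F1 F2 (B n))"
    proof (intro exI[of _ C'] conjI allI impI C'(1))
      fix B :: "nat \<Rightarrow> complex^'n^'n"
      assume Bs: "\<forall>n. B n \<in> Stab F1 F2"
        and f0: "(\<lambda>n. flag_dist (flag_act (matrix_inv (B n)) F3) F1) \<longlonglongrightarrow> 0"
      have g0: "(\<lambda>n. ratio_max F1 F2 (B n)) \<longlonglongrightarrow> 0" by (rule part1[OF Bs f0])
      have e1: "\<forall>\<^sub>F n in sequentially. \<alpha> * ratio_max F1 F2 (B n) \<le> flag_dist (flag_act (matrix_inv (B n)) F3) F1"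
        by (rule ev1[OF Bs f0])
      have e2: "\<forall>\<^sub>F n in sequentially. ratio_max F1 F2 (B n) < \<rho>0"
        using order_tendstoD(2)[OF g0 \<rho>0] .
      show "\<forall>\<^sub>F n in sequentially.
               ratio_max F1 F2 (B n) / C' \<le> flag_dist (flag_act (matrix_inv (B n)) F3) F1 \<and>
               flag_dist (flag_act (matrix_inv (B n)) F3) F1 \<le> C' * ratio_max F1 F2 (B n)"
        using e1 e2
      proof eventually_elim
        case (elim n)
        let ?g = "ratio_max F1 F2 (B n)"
        let ?f = "flag_dist (flag_act (matrix_inv (B n)) F3) F1"
        have g: "0 \<le> ?g" by (rule rm_nonneg)
        have "?g / C' = (1 / C') * ?g" by simp
        also have "\<dots> \<le> \<alpha> * ?g" using C'(3) g by (rule mult_right_mono)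
        also have "\<dots> \<le> ?f" using elim by simp
        finally have 1: "?g / C' \<le> ?f" .
        have "?f \<le> C * ?g" using up Bs elim by auto
        also have "\<dots> \<le> C' * ?g" using C'(2) g by (rule mult_right_mono)
        finally show ?case using 1 by simp
      qed
    qed
  qed
qed

end

theorem mainTheorem13:
  fixes F1 F2 F3 :: "nat \<Rightarrow> (complex^'n) set"
  assumes "is_flag F1" and "is_flag F2" and "is_flag F3"
    and "general_position F1 F2 F3"
    and "property_star F1 F2 F3"
  shows "(\<forall>B :: nat \<Rightarrow> complex^'n^'n. (\<forall>n. B n \<in> Stab F1 F2) \<longrightarrow>
            ((\<lambda>n. flag_dist (flag_act (matrix_inv (B n)) F3) F1) \<longlonglongrightarrow> 0
             \<longleftrightarrow> (\<lambda>n. ratio_max F1 F2 (B n)) \<longlonglongrightarrow> 0))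
       \<and> (\<exists>C>0. \<forall>B :: nat \<Rightarrow> complex^'n^'n. (\<forall>n. B n \<in> Stab F1 F2) \<longrightarrow>
            (\<lambda>n. flag_dist (flag_act (matrix_inv (B n)) F3) F1) \<longlonglongrightarrow> 0 \<longrightarrow>
            (\<forall>\<^sub>F n in sequentially.
               ratio_max F1 F2 (B n) / C \<le> flag_dist (flag_act (matrix_inv (B n)) F3) F1 \<and>
               flag_dist (flag_act (matrix_inv (B n)) F3) F1 \<le> C * ratio_max F1 F2 (B n)))"
proof -
  interpret setting F1 F2 F3
  proof unfold_locales
    show "is_flag F1" "is_flag F2" "is_flag F3" using assms(1-3) .
    show "transverse F1 F2" "transverse F2 F3"
      "\<forall>i\<in>{1..<CARD('n)}. bij_betw (proj_L F1 F2 i) (F2 (i + 1) \<inter> F3 (CARD('n) - i)) (Lline F1 F2 i)"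
      using assms(5) unfolding property_star_def by auto
  qed
  show ?thesis by (rule final)
qed

end
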